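(* Let $\mathbf{H}\in\mathbb{H}^4$. Then: (1) $\mathbf{Cov}_1(\mathbf{H})=\{0\}$ iff $\mathbf{Cov}_2(\mathbf{H})$ is at least orthotropic; (2) $\dim\mathbf{Cov}_1(\mathbf{H})=1$ iff $\mathbf{Cov}_2(\mathbf{H})$ is monoclinic; (3) $\dim\mathbf{Cov}_1(\mathbf{H})=3$ iff $\mathbf{Cov}_2(\mathbf{H})$ is triclinic.
   Context: $\mathbb{H}^4$ is the space of totally symmetric traceless fourth-order tensors on $\mathbb{R}^3$ with $SO(3)$-action $(g\star\mathbf{H})(x_1,\dots,x_4)=\mathbf{H}(g^{-1}x_1,\dots,g^{-1}x_4)$. $\mathbf{Cov}_1(\mathbf{H})\subset\mathbb{R}^3$ (resp. $\mathbf{Cov}_2(\mathbf{H})\subset\mathrm{Sym}^2(\mathbb{R}^3)$) is the set of values at $\mathbf{H}$ of all $SO(3)$-equivariant polynomial maps $\mathbb{H}^4\to\mathbb{R}^3$ (resp. $\to\mathrm{Sym}^2(\mathbb{R}^3)$). Symmetry group of a subspace: elements of $SO(3)$ fixing each member; symmetry class: its conjugacy class. Orthotropic $=[\mathbb{D}_2]$ (identity and rotations by $\pi$ about the coordinate axes), monoclinic $=[\mathbb{Z}_2]$ (group of order two generated by a rotation by $\pi$), triclinic = trivial group. "At least orthotropic" means the symmetry group contains a conjugate of $\mathbb{D}_2$. *)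

theory Defs
  imports "HOL-Analysis.Analysis"
begin

type_synonym tensor4 = "3 \<Rightarrow> 3 \<Rightarrow> 3 \<Rightarrow> 3 \<Rightarrow> real"

text \<open>Total symmetry is expressed by invariance under the adjacent transpositions,
  which generate the symmetric group on the four slots.\<close>
definition H4 :: "tensor4 set" where
  "H4 = {H. (\<forall>i j k l. H i j k l = H j i k l \<and> H i j k l = H i k j l \<and> H i j k l = H i j l k)
            \<and> (\<forall>k l. (\<Sum>i\<in>UNIV. H i i k l) = 0)}"

definition SO3 :: "(real^3^3) set" where
  "SO3 = {g. orthogonal_matrix g \<and> det g = 1}"

text \<open>(g * H)(x1,..,x4) = H(g^-1 x1, .., g^-1 x4), in components.\<close>
definition act4 :: "real^3^3 \<Rightarrow> tensor4 \<Rightarrow> tensor4" where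
  "act4 g H = (\<lambda>i j k l. \<Sum>a\<in>UNIV. \<Sum>b\<in>UNIV. \<Sum>c\<in>UNIV. \<Sum>d\<in>UNIV.
                 g$i$a * g$j$b * g$k$c * g$l$d * H a b c d)"

inductive tpoly :: "(tensor4 \<Rightarrow> real) \<Rightarrow> bool" where
  tpoly_const: "tpoly (\<lambda>X. c)"
| tpoly_coord: "tpoly (\<lambda>X. X i j k l)"
| tpoly_add: "tpoly p \<Longrightarrow> tpoly q \<Longrightarrow> tpoly (\<lambda>X. p X + q X)"
| tpoly_mult: "tpoly p \<Longrightarrow> tpoly q \<Longrightarrow> tpoly (\<lambda>X. p X * q X)"

definition Cov1 :: "tensor4 \<Rightarrow> (real^3) set" where
  "Cov1 H = {f H | f. (\<forall>i. tpoly (\<lambda>X. f X $ i))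
                 \<and> (\<forall>g\<in>SO3. \<forall>X\<in>H4. f (act4 g X) = g *v f X)}"

definition Cov2 :: "tensor4 \<Rightarrow> (real^3^3) set" where
  "Cov2 H = {f H | f. (\<forall>i j. tpoly (\<lambda>X. f X $ i $ j))
                 \<and> (\<forall>X\<in>H4. transpose (f X) = f X)
                 \<and> (\<forall>g\<in>SO3. \<forall>X\<in>H4. f (act4 g X) = g ** f X ** transpose g)}"

definition symgroup :: "(real^3^3) set \<Rightarrow> (real^3^3) set" where
  "symgroup S = {g\<in>SO3. \<forall>A\<in>S. g ** A ** transpose g = A}"

definition conjg :: "real^3^3 \<Rightarrow> (real^3^3) set \<Rightarrow> (real^3^3) set" where
  "conjg g G = (\<lambda>h. g ** h ** transpose g) ` G"

definition diag3 :: "real \<Rightarrow> real \<Rightarrow> real \<Rightarrow> real^3^3" where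
  "diag3 a b c = (\<chi> i j. if i = j then (vector [a, b, c] :: real^3) $ i else 0)"

definition D2 :: "(real^3^3) set" where
  "D2 = {mat 1, diag3 1 (-1) (-1), diag3 (-1) 1 (-1), diag3 (-1) (-1) 1}"

definition Z2 :: "(real^3^3) set" where
  "Z2 = {mat 1, diag3 (-1) (-1) 1}"

end

theory Submission
  imports Defs "HOL-Analysis.Cross3"
begin

lemma sum_swap4:
  "(\<Sum>k\<in>K. \<Sum>a\<in>A. \<Sum>b\<in>B. \<Sum>c\<in>C. \<Sum>d\<in>D. f k a b c d) = (\<Sum>a\<in>A. \<Sum>b\<in>B. \<Sum>c\<in>C. \<Sum>d\<in>D. \<Sum>k\<in>K. f k a b c d)"
  apply (rule trans[OF sum.swap]) apply (rule sum.cong[OF refl])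
  apply (rule trans[OF sum.swap]) apply (rule sum.cong[OF refl])
  apply (rule trans[OF sum.swap]) apply (rule sum.cong[OF refl])
  apply (rule sum.swap) done

lemma delta_sum: "(\<Sum>p\<in>(UNIV::'a::finite set). (if c = p then 1 else 0) * f p) = (f c :: real)"
proof -
  have "(\<Sum>p\<in>(UNIV::'a set). (if c = p then 1 else 0) * f p) = (\<Sum>p\<in>UNIV. if c = p then f p else 0)"
    by (rule sum.cong) auto
  thus ?thesis by simp
qed
lemma delta_sum': "(\<Sum>p\<in>(UNIV::'a::finite set). f p * (if p = c then 1 else 0)) = (f c :: real)"
proof -
  have "(\<Sum>p\<in>(UNIV::'a set). f p * (if p = c then 1 else 0)) = (\<Sum>p\<in>UNIV. if c = p then f p else 0)"
    by (rule sum.cong) auto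
  thus ?thesis by simp
qed

lemma orth_col: fixes g :: "real^'n^'n" assumes "orthogonal_matrix g"
  shows "(\<Sum>k\<in>UNIV. g$k$a * g$k$b) = (if a = b then 1 else 0)"
proof -
  have "transpose g ** g = mat 1" using assms by (simp add: orthogonal_matrix_def)
  hence "(transpose g ** g)$a$b = mat 1 $ a $ b" by simp
  thus ?thesis by (simp add: matrix_matrix_mult_def transpose_def mat_def)
qed

lemma orth_row: fixes g :: "real^'n^'n" assumes "orthogonal_matrix g"
  shows "(\<Sum>k\<in>UNIV. g$a$k * g$b$k) = (if a = b then 1 else 0)"
proof -
  have "g ** transpose g = mat 1" using assms by (simp add: orthogonal_matrix_def)
  hence "(g ** transpose g)$a$b = mat 1 $ a $ b" by simp
  thus ?thesis by (simp add: matrix_matrix_mult_def transpose_def mat_def)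
qed

lemma orth_col_vec: fixes g :: "real^'n^'n" assumes "orthogonal_matrix g"
  shows "(\<Sum>k\<in>UNIV. g$k$c * (g *v w)$k) = w$c"
proof -
  have "(\<Sum>k\<in>UNIV. g$k$c * (g *v w)$k) = (\<Sum>k\<in>UNIV. \<Sum>p\<in>UNIV. g$k$c * g$k$p * w$p)"
    by (simp add: matrix_vector_mult_def sum_distrib_left mult.assoc)
  also have "\<dots> = (\<Sum>p\<in>UNIV. (\<Sum>k\<in>UNIV. g$k$c * g$k$p) * w$p)"
    by (subst sum.swap) (simp add: sum_distrib_right)
  also have "\<dots> = w$c" by (simp only: orth_col[OF assms]) (rule delta_sum)
  finally show ?thesis .
qed

lemma pull2: "(\<Sum>k\<in>K. \<Sum>l\<in>L. c * (A k * B l)) = (c::real) * ((\<Sum>k\<in>K. A k) * (\<Sum>l\<in>L. B l))"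
  unfolding sum_product by (simp only: sum_distrib_left)

definition c2 :: "tensor4 \<Rightarrow> real^3 \<Rightarrow> real^3^3" where
  "c2 X w = (\<chi> i j. \<Sum>k\<in>UNIV. \<Sum>l\<in>UNIV. X i j k l * w$k * w$l)"

lemma c2_equiv: fixes g :: "real^3^3" assumes "orthogonal_matrix g"
  shows "c2 (act4 g X) (g *v w) = g ** c2 X w ** transpose g"
proof -
  have "(c2 (act4 g X) (g *v w))$i$j = (g ** c2 X w ** transpose g)$i$j" for i j
  proof -
    have "(c2 (act4 g X) (g *v w))$i$j = (\<Sum>k\<in>UNIV. \<Sum>l\<in>UNIV. \<Sum>a\<in>UNIV. \<Sum>b\<in>UNIV. \<Sum>c\<in>UNIV. \<Sum>d\<in>UNIV.
        g$i$a * g$j$b * X a b c d * ((g$k$c * (g *v w)$k) * (g$l$d * (g *v w)$l)))"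
      by (simp add: c2_def act4_def sum_distrib_left sum_distrib_right mult_ac)
    also have "\<dots> = (\<Sum>a\<in>UNIV. \<Sum>b\<in>UNIV. \<Sum>c\<in>UNIV. \<Sum>d\<in>UNIV. \<Sum>k\<in>UNIV. \<Sum>l\<in>UNIV.
        g$i$a * g$j$b * X a b c d * ((g$k$c * (g *v w)$k) * (g$l$d * (g *v w)$l)))"
      apply (rule trans[OF sum.cong[OF refl sum_swap4]]) apply (rule sum_swap4) done
    also have "\<dots> = (\<Sum>a\<in>UNIV. \<Sum>b\<in>UNIV. \<Sum>c\<in>UNIV. \<Sum>d\<in>UNIV. 
        g$i$a * g$j$b * X a b c d * ((\<Sum>k\<in>UNIV. g$k$c * (g *v w)$k) * (\<Sum>l\<in>UNIV. g$l$d * (g *v w)$l)))"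
      by (simp only: pull2)
    also have "\<dots> = (\<Sum>a\<in>UNIV. \<Sum>b\<in>UNIV. \<Sum>c\<in>UNIV. \<Sum>d\<in>UNIV. g$i$a * g$j$b * X a b c d * (w$c * w$d))"
      by (simp add: orth_col_vec[OF assms])
    also have "\<dots> = (\<Sum>b\<in>UNIV. \<Sum>a\<in>UNIV. \<Sum>c\<in>UNIV. \<Sum>d\<in>UNIV. g$i$a * g$j$b * X a b c d * (w$c * w$d))"
      by (rule sum.swap)
    also have "\<dots> = (g ** c2 X w ** transpose g)$i$j"
      by (simp add: c2_def matrix_matrix_mult_def transpose_def sum_distrib_left sum_distrib_right mult_ac)
    finally show ?thesis .
  qed
  thus ?thesis by (simp add: vec_eq_iff)
qed

definition F4 :: "tensor4 \<Rightarrow> real^3 \<Rightarrow> real^3 \<Rightarrow> real^3 \<Rightarrow> real^3 \<Rightarrow> real" where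
  "F4 X x1 x2 x3 x4 = (\<Sum>i\<in>UNIV. \<Sum>j\<in>UNIV. \<Sum>k\<in>UNIV. \<Sum>l\<in>UNIV. X i j k l * x1$i * x2$j * x3$k * x4$l)"

lemma pull4: "(\<Sum>i\<in>I. \<Sum>j\<in>J. \<Sum>k\<in>K. \<Sum>l\<in>L. c * (A i * B j * C k * D l)) =
   (c::real) * ((\<Sum>i\<in>I. A i) * (\<Sum>j\<in>J. B j) * (\<Sum>k\<in>K. C k) * (\<Sum>l\<in>L. D l))"
  by (simp only: mult.assoc[symmetric] sum_distrib_left[symmetric] sum_distrib_right[symmetric])

lemma F4_act: "F4 (act4 g X) x1 x2 x3 x4 = F4 X (transpose g *v x1) (transpose g *v x2) (transpose g *v x3) (transpose g *v x4)"
proof -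
  have "F4 (act4 g X) x1 x2 x3 x4 = (\<Sum>i\<in>UNIV. \<Sum>j\<in>UNIV. \<Sum>k\<in>UNIV. \<Sum>l\<in>UNIV. \<Sum>a\<in>UNIV. \<Sum>b\<in>UNIV. \<Sum>c\<in>UNIV. \<Sum>d\<in>UNIV.
     X a b c d * ((g$i$a * x1$i) * (g$j$b * x2$j) * (g$k$c * x3$k) * (g$l$d * x4$l)))"
    by (simp add: F4_def act4_def sum_distrib_left sum_distrib_right mult_ac)
  also have "\<dots> = (\<Sum>a\<in>UNIV. \<Sum>b\<in>UNIV. \<Sum>c\<in>UNIV. \<Sum>d\<in>UNIV. \<Sum>i\<in>UNIV. \<Sum>j\<in>UNIV. \<Sum>k\<in>UNIV. \<Sum>l\<in>UNIV.
     X a b c d * ((g$i$a * x1$i) * (g$j$b * x2$j) * (g$k$c * x3$k) * (g$l$d * x4$l)))"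
    apply (rule trans[OF sum.cong[OF refl, OF trans[OF sum.cong[OF refl, OF trans[OF sum.cong[OF refl sum_swap4]]]]]])
    apply (rule sum_swap4)
    apply (rule sum_swap4)
    apply (rule sum_swap4)
    done
  also have "\<dots> = (\<Sum>a\<in>UNIV. \<Sum>b\<in>UNIV. \<Sum>c\<in>UNIV. \<Sum>d\<in>UNIV. X a b c d * 
     ((\<Sum>i\<in>UNIV. g$i$a * x1$i) * (\<Sum>j\<in>UNIV. g$j$b * x2$j) * (\<Sum>k\<in>UNIV. g$k$c * x3$k) * (\<Sum>l\<in>UNIV. g$l$d * x4$l)))"
    by (simp only: pull4)
  also have "\<dots> = F4 X (transpose g *v x1) (transpose g *v x2) (transpose g *v x3) (transpose g *v x4)"
    by (simp add: F4_def matrix_vector_mult_def transpose_def mult_ac)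
  finally show ?thesis .
qed

lemma H4_D: assumes "X \<in> H4"
  shows "X i j k l = X j i k l" "X i j k l = X i k j l" "X i j k l = X i j l k"
    "(\<Sum>i\<in>UNIV. X i i k l) = 0"
  using assms unfolding H4_def by auto

lemma act4_sym1: assumes "X \<in> H4" shows "act4 g X j i k l = act4 g X i j k l"
proof -
  have "act4 g X j i k l = (\<Sum>b\<in>UNIV. \<Sum>a\<in>UNIV. \<Sum>c\<in>UNIV. \<Sum>d\<in>UNIV. g$j$a * g$i$b * g$k$c * g$l$d * X a b c d)"
    unfolding act4_def by (rule sum.swap)
  also have "\<dots> = act4 g X i j k l" unfolding act4_def
    by (intro sum.cong refl) (simp add: H4_D(1)[OF assms] mult_ac)
  finally show ?thesis .
qed

lemma act4_sym2: assumes "X \<in> H4" shows "act4 g X i k j l = act4 g X i j k l"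
proof -
  have "act4 g X i k j l = (\<Sum>a\<in>UNIV. \<Sum>c\<in>UNIV. \<Sum>b\<in>UNIV. \<Sum>d\<in>UNIV. g$i$a * g$k$b * g$j$c * g$l$d * X a b c d)"
    unfolding act4_def by (intro sum.cong refl sum.swap)
  also have "\<dots> = act4 g X i j k l" unfolding act4_def
    by (intro sum.cong refl) (simp add: H4_D(2)[OF assms] mult_ac)
  finally show ?thesis .
qed

lemma act4_sym3: assumes "X \<in> H4" shows "act4 g X i j l k = act4 g X i j k l"
proof -
  have "act4 g X i j l k = (\<Sum>a\<in>UNIV. \<Sum>b\<in>UNIV. \<Sum>d\<in>UNIV. \<Sum>c\<in>UNIV. g$i$a * g$j$b * g$l$c * g$k$d * X a b c d)"
    unfolding act4_def by (intro sum.cong refl sum.swap)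
  also have "\<dots> = act4 g X i j k l" unfolding act4_def
    by (intro sum.cong refl) (simp add: H4_D(3)[OF assms] mult_ac)
  finally show ?thesis .
qed

lemma act4_trace: fixes g :: "real^3^3" assumes "X \<in> H4" "orthogonal_matrix g"
  shows "(\<Sum>i\<in>UNIV. act4 g X i i k l) = 0"
proof -
  have "(\<Sum>i\<in>UNIV. act4 g X i i k l) = (\<Sum>i\<in>UNIV. \<Sum>a\<in>UNIV. \<Sum>b\<in>UNIV. \<Sum>c\<in>UNIV. \<Sum>d\<in>UNIV.
      (g$i$a * g$i$b) * (g$k$c * g$l$d * X a b c d))"
    by (simp add: act4_def mult_ac)
  also have "\<dots> = (\<Sum>a\<in>UNIV. \<Sum>b\<in>UNIV. \<Sum>c\<in>UNIV. \<Sum>d\<in>UNIV. \<Sum>i\<in>UNIV.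
      (g$i$a * g$i$b) * (g$k$c * g$l$d * X a b c d))"
    by (rule sum_swap4)
  also have "\<dots> = (\<Sum>a\<in>UNIV. \<Sum>b\<in>UNIV. \<Sum>c\<in>UNIV. \<Sum>d\<in>UNIV. 
      (if a = b then 1 else 0) * (g$k$c * g$l$d * X a b c d))"
    by (simp only: sum_distrib_right[symmetric] orth_col[OF assms(2)])
  also have "\<dots> = (\<Sum>a\<in>UNIV. \<Sum>b\<in>UNIV. (if a = b then 1 else 0) * (\<Sum>c\<in>UNIV. \<Sum>d\<in>UNIV. 
      (g$k$c * g$l$d * X a b c d)))"
    by (simp only: sum_distrib_left)
  also have "\<dots> = (\<Sum>a\<in>UNIV. (\<Sum>c\<in>UNIV. \<Sum>d\<in>UNIV. (g$k$c * g$l$d * X a a c d)))"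
    by (simp only: delta_sum)
  also have "\<dots> = (\<Sum>c\<in>UNIV. \<Sum>d\<in>UNIV. g$k$c * g$l$d * (\<Sum>a\<in>UNIV. X a a c d))"
    apply (rule trans[OF sum.swap]) apply (rule sum.cong[OF refl]) apply (rule trans[OF sum.swap])
    apply (rule sum.cong[OF refl]) by (simp add: sum_distrib_left)
  also have "\<dots> = 0" by (simp add: H4_D(4)[OF assms(1)])
  finally show ?thesis .
qed

lemma act4_H4: fixes g :: "real^3^3" assumes "X \<in> H4" "orthogonal_matrix g"
  shows "act4 g X \<in> H4"
  unfolding H4_def using act4_sym1[OF assms(1)] act4_sym2[OF assms(1)] act4_sym3[OF assms(1)] act4_trace[OF assms]
  by auto

lemma delta_sum2: "(\<Sum>p\<in>(UNIV::'a::finite set). f p * (if c = p then 1 else 0)) = (f c :: real)"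
proof -
  have "(\<Sum>p\<in>(UNIV::'a set). f p * (if c = p then 1 else 0)) = (\<Sum>p\<in>UNIV. if c = p then f p else 0)"
    by (rule sum.cong) auto
  thus ?thesis by simp
qed

lemma swap_out3: "(\<Sum>b\<in>B. \<Sum>c\<in>C. \<Sum>d\<in>D. \<Sum>a\<in>A. f a b c d) = (\<Sum>a\<in>A. \<Sum>b\<in>B. \<Sum>c\<in>C. \<Sum>d\<in>D. f a b c d)"
  apply (rule sym) apply (rule trans[OF sum.swap]) apply (rule sum.cong[OF refl])
  apply (rule trans[OF sum.swap]) apply (rule sum.cong[OF refl]) by (rule sum.swap)

lemma ORTH: fixes g :: "real^3^3" assumes "orthogonal_matrix g"
  shows "(\<Sum>k\<in>UNIV. (\<Sum>b\<in>UNIV. g$k$b * F b) * (\<Sum>b\<in>UNIV. g$k$b * G b)) = (\<Sum>b\<in>UNIV. F b * G b)"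
proof -
  have "(\<Sum>k\<in>UNIV. (\<Sum>b\<in>UNIV. g$k$b * F b) * (\<Sum>b\<in>UNIV. g$k$b * G b))
     = (\<Sum>k\<in>UNIV. \<Sum>b\<in>UNIV. \<Sum>b'\<in>UNIV. (g$k$b * g$k$b') * (F b * G b'))"
    by (simp add: sum_product mult_ac)
  also have "\<dots> = (\<Sum>b\<in>UNIV. \<Sum>b'\<in>UNIV. (\<Sum>k\<in>UNIV. g$k$b * g$k$b') * (F b * G b'))"
    apply (rule trans[OF sum.swap]) apply (rule sum.cong[OF refl]) apply (rule trans[OF sum.swap])
    by (simp add: sum_distrib_right)
  also have "\<dots> = (\<Sum>b\<in>UNIV. \<Sum>b'\<in>UNIV. (F b * G b') * (if b = b' then 1 else 0))"
    by (simp only: orth_col[OF assms] mult.commute[of "if _ then _ else _"])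
  also have "\<dots> = (\<Sum>b\<in>UNIV. F b * G b)" by (simp only: delta_sum2)
  finally show ?thesis .
qed

definition dd :: "tensor4 \<Rightarrow> real^3^3" where
  "dd X = (\<chi> i j. \<Sum>k\<in>UNIV. \<Sum>l\<in>UNIV. \<Sum>m\<in>UNIV. X i k l m * X j k l m)"

lemma dd_equiv: fixes g :: "real^3^3" assumes "orthogonal_matrix g"
  shows "dd (act4 g X) = g ** dd X ** transpose g"
proof -
  have "(dd (act4 g X))$i$j = (g ** dd X ** transpose g)$i$j" for i j
  proof -
    define A3 where "A3 = (\<lambda>i b c d. \<Sum>a\<in>UNIV. g$i$a * X a b c d)"
    define A2 where "A2 = (\<lambda>i b c m. \<Sum>d\<in>UNIV. g$m$d * A3 i b c d)"
    define A1 where "A1 = (\<lambda>i b l m. \<Sum>c\<in>UNIV. g$l$c * A2 i b c m)"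
    have e1: "act4 g X i k l m = (\<Sum>b\<in>UNIV. g$k$b * A1 i b l m)" for i k l m
    proof -
      have "act4 g X i k l m = (\<Sum>b\<in>UNIV. \<Sum>c\<in>UNIV. \<Sum>d\<in>UNIV. \<Sum>a\<in>UNIV. g$k$b * (g$l$c * (g$m$d * (g$i$a * X a b c d))))"
        unfolding act4_def
        apply (rule trans[OF sum.swap]) apply (rule sum.cong[OF refl])
        apply (rule trans[OF sum.swap]) apply (rule sum.cong[OF refl])
        apply (rule trans[OF sum.swap]) apply (rule sum.cong[OF refl])
        by (simp add: mult_ac)
      thus ?thesis by (simp add: A1_def A2_def A3_def sum_distrib_left)
    qed
    have "(dd (act4 g X))$i$j = (\<Sum>k\<in>UNIV. \<Sum>l\<in>UNIV. \<Sum>m\<in>UNIV. act4 g X i k l m * act4 g X j k l m)"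
      by (simp add: dd_def)
    also have "\<dots> = (\<Sum>l\<in>UNIV. \<Sum>m\<in>UNIV. \<Sum>k\<in>UNIV. act4 g X i k l m * act4 g X j k l m)"
      apply (rule trans[OF sum.swap]) apply (rule sum.cong[OF refl]) by (rule sum.swap)
    also have "\<dots> = (\<Sum>l\<in>UNIV. \<Sum>m\<in>UNIV. \<Sum>b\<in>UNIV. A1 i b l m * A1 j b l m)"
      by (simp only: e1 ORTH[OF assms])
    also have "\<dots> = (\<Sum>m\<in>UNIV. \<Sum>b\<in>UNIV. \<Sum>l\<in>UNIV. A1 i b l m * A1 j b l m)"
      apply (rule trans[OF sum.swap]) apply (rule sum.cong[OF refl]) by (rule sum.swap)
    also have "\<dots> = (\<Sum>m\<in>UNIV. \<Sum>b\<in>UNIV. \<Sum>c\<in>UNIV. A2 i b c m * A2 j b c m)"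
      by (simp only: A1_def ORTH[OF assms])
    also have "\<dots> = (\<Sum>b\<in>UNIV. \<Sum>c\<in>UNIV. \<Sum>m\<in>UNIV. A2 i b c m * A2 j b c m)"
      apply (rule trans[OF sum.swap]) apply (rule sum.cong[OF refl]) by (rule sum.swap)
    also have "\<dots> = (\<Sum>b\<in>UNIV. \<Sum>c\<in>UNIV. \<Sum>d\<in>UNIV. A3 i b c d * A3 j b c d)"
      by (simp only: A2_def ORTH[OF assms])
    also have "\<dots> = (\<Sum>b\<in>UNIV. \<Sum>c\<in>UNIV. \<Sum>d\<in>UNIV. \<Sum>a\<in>UNIV. \<Sum>a'\<in>UNIV. g$i$a * g$j$a' * (X a b c d * X a' b c d))"
      by (simp add: A3_def sum_product mult_ac)
    also have "\<dots> = (\<Sum>a\<in>UNIV. \<Sum>a'\<in>UNIV. \<Sum>b\<in>UNIV. \<Sum>c\<in>UNIV. \<Sum>d\<in>UNIV. g$i$a * g$j$a' * (X a b c d * X a' b c d))"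
      apply (rule trans[OF swap_out3]) apply (rule sum.cong[OF refl]) by (rule swap_out3)
    also have "\<dots> = (g ** dd X ** transpose g)$i$j"
      apply (rule trans[OF sum.swap])
      by (simp add: matrix_matrix_mult_def transpose_def dd_def sum_distrib_left sum_distrib_right mult_ac)
    finally show ?thesis .
  qed
  thus ?thesis by (simp add: vec_eq_iff)
qed

lemma SO3_D: assumes "g \<in> SO3"
  shows "orthogonal_matrix g" "det g = 1" "transpose g ** g = mat 1" "g ** transpose g = mat 1"
    "rotation_matrix g"
  using assms by (auto simp: SO3_def orthogonal_matrix_def rotation_matrix_def)

lemma tpoly_sum: "finite A \<Longrightarrow> (\<And>a. a \<in> A \<Longrightarrow> tpoly (f a)) \<Longrightarrow> tpoly (\<lambda>X. \<Sum>a\<in>A. f a X)"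
proof (induction A rule: finite_induct)
  case empty
  then show ?case using tpoly_const[of 0] by simp
next
  case (insert x F)
  then show ?case using tpoly_add[of "f x" "\<lambda>X. \<Sum>a\<in>F. f a X"] by simp
qed

lemma tpoly_scale: "tpoly p \<Longrightarrow> tpoly (\<lambda>X. c * p X)"
  using tpoly_mult[OF tpoly_const[of c]] by simp

lemma tpoly_diff: "tpoly p \<Longrightarrow> tpoly q \<Longrightarrow> tpoly (\<lambda>X. p X - q X)"
proof -
  assume "tpoly p" "tpoly q"
  hence "tpoly (\<lambda>X. p X + (-1) * q X)" by (intro tpoly_add tpoly_scale)
  thus ?thesis by simp
qed

definition cov1map :: "(tensor4 \<Rightarrow> real^3) \<Rightarrow> bool" where
  "cov1map f \<longleftrightarrow> (\<forall>i. tpoly (\<lambda>X. f X $ i)) \<and> (\<forall>g\<in>SO3. \<forall>X\<in>H4. f (act4 g X) = g *v f X)"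

definition cov2map :: "(tensor4 \<Rightarrow> real^3^3) \<Rightarrow> bool" where
  "cov2map f \<longleftrightarrow> (\<forall>i j. tpoly (\<lambda>X. f X $ i $ j)) \<and> (\<forall>X\<in>H4. transpose (f X) = f X)
                 \<and> (\<forall>g\<in>SO3. \<forall>X\<in>H4. f (act4 g X) = g ** f X ** transpose g)"

lemma Cov1_eq: "Cov1 H = {f H | f. cov1map f}"
  unfolding Cov1_def cov1map_def by simp
lemma Cov2_eq: "Cov2 H = {f H | f. cov2map f}"
  unfolding Cov2_def cov2map_def by simp

lemma cov1_zero: "cov1map (\<lambda>X. 0)"
  unfolding cov1map_def using tpoly_const[of 0] by simp

lemma transpose_add: "transpose (A + B) = transpose A + (transpose B :: real^3^3)"
  by (simp add: transpose_def vec_eq_iff)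

lemma conj_scale: "g ** (c *\<^sub>R A) ** transpose g = c *\<^sub>R (g ** A ** transpose g)" for g A :: "real^3^3"
  by (simp add: matrix_matrix_mult_def vec_eq_iff sum_distrib_left mult_ac)

lemma matrix_add_rdistrib: "(A + B) ** C = A ** C + B ** (C::real^3^3)"
  by (simp add: matrix_matrix_mult_def vec_eq_iff sum.distrib ring_distribs)
lemma matrix_diff_rdistrib: "(A - B) ** C = A ** C - B ** (C::real^3^3)"
  by (simp add: matrix_matrix_mult_def vec_eq_iff sum_subtractf ring_distribs)
lemma matrix_diff_ldistrib: "C ** (A - B) = C ** A - C ** (B::real^3^3)"
  by (simp add: matrix_matrix_mult_def vec_eq_iff sum_subtractf ring_distribs)
lemma transpose_diff: "transpose (A - B) = transpose A - (transpose B :: real^3^3)"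
  by (simp add: transpose_def vec_eq_iff)

lemma cov1mapD: assumes "cov1map f"
  shows "\<And>i. tpoly (\<lambda>X. f X $ i)" "\<And>g X. g \<in> SO3 \<Longrightarrow> X \<in> H4 \<Longrightarrow> f (act4 g X) = g *v f X"
  using assms unfolding cov1map_def by auto

lemma cov2mapD: assumes "cov2map f"
  shows "\<And>i j. tpoly (\<lambda>X. f X $ i $ j)" "\<And>X. X \<in> H4 \<Longrightarrow> transpose (f X) = f X"
   "\<And>g X. g \<in> SO3 \<Longrightarrow> X \<in> H4 \<Longrightarrow> f (act4 g X) = g ** f X ** transpose g"
  using assms unfolding cov2map_def by auto

lemma cov1mapI: assumes "\<And>i. tpoly (\<lambda>X. f X $ i)" "\<And>g X. g \<in> SO3 \<Longrightarrow> X \<in> H4 \<Longrightarrow> f (act4 g X) = g *v f X"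
  shows "cov1map f" using assms unfolding cov1map_def by auto

lemma cov2mapI: assumes "\<And>i j. tpoly (\<lambda>X. f X $ i $ j)" "\<And>X. X \<in> H4 \<Longrightarrow> transpose (f X) = f X"
   "\<And>g X. g \<in> SO3 \<Longrightarrow> X \<in> H4 \<Longrightarrow> f (act4 g X) = g ** f X ** transpose g"
  shows "cov2map f" using assms unfolding cov2map_def by auto

lemma cov1_add: assumes "cov1map f" "cov1map h" shows "cov1map (\<lambda>X. f X + h X)"
proof (rule cov1mapI)
  fix i show "tpoly (\<lambda>X. (f X + h X) $ i)"
    using tpoly_add[OF cov1mapD(1)[OF assms(1)] cov1mapD(1)[OF assms(2)], of i] by simp
next
  fix g X assume "g \<in> SO3" "X \<in> H4"
  thus "f (act4 g X) + h (act4 g X) = g *v (f X + h X)"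
    using cov1mapD(2)[OF assms(1)] cov1mapD(2)[OF assms(2)] by (simp add: matrix_vector_right_distrib)
qed

lemma cov1_scale: assumes "cov1map f" shows "cov1map (\<lambda>X. c *\<^sub>R f X)"
proof (rule cov1mapI)
  fix i have "tpoly (\<lambda>X. c * f X $ i)" by (rule tpoly_scale[OF cov1mapD(1)[OF assms(1)]])
  thus "tpoly (\<lambda>X. (c *\<^sub>R f X) $ i)" by simp
next
  fix g X assume "g \<in> SO3" "X \<in> H4"
  thus "c *\<^sub>R f (act4 g X) = g *v (c *\<^sub>R f X)"
    using cov1mapD(2)[OF assms(1)] by (simp add: matrix_vector_mult_scaleR)
qed

lemma cov2_add: assumes "cov2map f" "cov2map h" shows "cov2map (\<lambda>X. f X + h X)"
proof (rule cov2mapI)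
  fix i j show "tpoly (\<lambda>X. (f X + h X) $ i $ j)"
    using tpoly_add[OF cov2mapD(1)[OF assms(1)] cov2mapD(1)[OF assms(2)], of i j] by simp
next
  fix X assume "X \<in> H4"
  thus "transpose (f X + h X) = f X + h X"
    using cov2mapD(2)[OF assms(1)] cov2mapD(2)[OF assms(2)] by (simp add: transpose_add)
next
  fix g X assume "g \<in> SO3" "X \<in> H4"
  thus "f (act4 g X) + h (act4 g X) = g ** (f X + h X) ** transpose g"
    using cov2mapD(3)[OF assms(1)] cov2mapD(3)[OF assms(2)] by (simp add: matrix_add_ldistrib matrix_add_rdistrib)
qed

lemma cov2_scale: assumes "cov2map f" shows "cov2map (\<lambda>X. c *\<^sub>R f X)"
proof (rule cov2mapI)
  fix i j have "tpoly (\<lambda>X. c * f X $ i $ j)" by (rule tpoly_scale[OF cov2mapD(1)[OF assms(1)]])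
  thus "tpoly (\<lambda>X. (c *\<^sub>R f X) $ i $ j)" by simp
next
  fix X assume "X \<in> H4"
  thus "transpose (c *\<^sub>R f X) = c *\<^sub>R f X"
    using cov2mapD(2)[OF assms(1)] by (simp add: transpose_scalar)
next
  fix g X assume "g \<in> SO3" "X \<in> H4"
  thus "c *\<^sub>R f (act4 g X) = g ** (c *\<^sub>R f X) ** transpose g"
    using cov2mapD(3)[OF assms(1)] by (simp add: conj_scale)
qed

lemma cov2_id: "cov2map (\<lambda>X. mat 1)"
  by (rule cov2mapI) (auto simp: SO3_D intro: tpoly_const)

lemma cov1_cross: "cov1map f \<Longrightarrow> cov1map h \<Longrightarrow> cov1map (\<lambda>X. cross3 (f X) (h X))"
  unfolding cov1map_def
proof (intro conjI allI ballI)
  fix i :: 3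
  assume a: "(\<forall>i. tpoly (\<lambda>X. f X $ i)) \<and> (\<forall>g\<in>SO3. \<forall>X\<in>H4. f (act4 g X) = g *v f X)"
     "(\<forall>i. tpoly (\<lambda>X. h X $ i)) \<and> (\<forall>g\<in>SO3. \<forall>X\<in>H4. h (act4 g X) = g *v h X)"
  have m: "tpoly (\<lambda>X. f X $ a * h X $ b)" for a b using a by (auto intro: tpoly_mult)
  show "tpoly (\<lambda>X. (cross3 (f X) (h X)) $ i)"
    using exhaust_3[of i] by (auto simp: cross3_def intro!: tpoly_diff m)
next
  fix g X assume a: "(\<forall>i. tpoly (\<lambda>X. f X $ i)) \<and> (\<forall>g\<in>SO3. \<forall>X\<in>H4. f (act4 g X) = g *v f X)"
     "(\<forall>i. tpoly (\<lambda>X. h X $ i)) \<and> (\<forall>g\<in>SO3. \<forall>X\<in>H4. h (act4 g X) = g *v h X)"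
    and g: "g \<in> SO3" and X: "X \<in> H4"
  show "cross3 (f (act4 g X)) (h (act4 g X)) = g *v (cross3 (f X) (h X))"
    using a g X by (simp add: cross_rotation_matrix SO3_D)
qed

lemma tpoly_mv: "(\<And>i j. tpoly (\<lambda>X. A X $ i $ j)) \<Longrightarrow> (\<And>i. tpoly (\<lambda>X. v X $ i)) \<Longrightarrow> tpoly (\<lambda>X. (A X *v v X) $ i)"
  unfolding matrix_vector_mult_def by (simp, intro tpoly_sum tpoly_mult, auto)

lemma tpoly_mm: "(\<And>i j. tpoly (\<lambda>X. A X $ i $ j)) \<Longrightarrow> (\<And>i j. tpoly (\<lambda>X. B X $ i $ j)) \<Longrightarrow> tpoly (\<lambda>X. (A X ** B X) $ i $ j)"
  unfolding matrix_matrix_mult_def by (simp, intro tpoly_sum tpoly_mult, auto)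

lemma cov1_mv: "cov2map A \<Longrightarrow> cov1map f \<Longrightarrow> cov1map (\<lambda>X. A X *v f X)"
  unfolding cov1map_def cov2map_def
proof (intro conjI allI ballI)
  fix i :: 3
  assume "(\<forall>i j. tpoly (\<lambda>X. A X $ i $ j)) \<and> (\<forall>X\<in>H4. transpose (A X) = A X) \<and> (\<forall>g\<in>SO3. \<forall>X\<in>H4. A (act4 g X) = g ** A X ** transpose g)"
    "(\<forall>i. tpoly (\<lambda>X. f X $ i)) \<and> (\<forall>g\<in>SO3. \<forall>X\<in>H4. f (act4 g X) = g *v f X)"
  thus "tpoly (\<lambda>X. (A X *v f X) $ i)" by (intro tpoly_mv) auto
next
  fix g X
  assume a: "(\<forall>i j. tpoly (\<lambda>X. A X $ i $ j)) \<and> (\<forall>X\<in>H4. transpose (A X) = A X) \<and> (\<forall>g\<in>SO3. \<forall>X\<in>H4. A (act4 g X) = g ** A X ** transpose g)"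
    "(\<forall>i. tpoly (\<lambda>X. f X $ i)) \<and> (\<forall>g\<in>SO3. \<forall>X\<in>H4. f (act4 g X) = g *v f X)"
    and g: "g \<in> SO3" and X: "X \<in> H4"
  have "A (act4 g X) *v f (act4 g X) = (g ** A X ** transpose g) *v (g *v f X)" using a g X by simp
  also have "\<dots> = g *v (A X *v f X)"
    by (simp add: matrix_vector_mul_assoc matrix_mul_assoc[symmetric] SO3_D[OF g])
  finally show "A (act4 g X) *v f (act4 g X) = g *v (A X *v f X)" .
qed

definition outer :: "real^3 \<Rightarrow> real^3 \<Rightarrow> real^3^3" where
  "outer v w = (\<chi> i j. v$i * w$j)"

lemma outer_conj: "g ** outer v w ** transpose g = outer (g *v v) (g *v w)"
proof -
  have "(g ** outer v w ** transpose g)$i$j = (outer (g *v v) (g *v w))$i$j" for i j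
  proof -
    have "(g ** outer v w ** transpose g)$i$j = (\<Sum>b\<in>UNIV. \<Sum>a\<in>UNIV. (g$i$a * v$a) * (g$j$b * w$b))"
      by (simp add: outer_def matrix_matrix_mult_def transpose_def sum_distrib_left sum_distrib_right mult_ac)
    also have "\<dots> = (outer (g *v v) (g *v w))$i$j"
      by (simp add: outer_def matrix_vector_mult_def sum_product) (rule sum.swap)
    finally show ?thesis .
  qed
  thus ?thesis by (simp add: vec_eq_iff)
qed

lemma cov2_outer: assumes "cov1map f" shows "cov2map (\<lambda>X. outer (f X) (f X))"
proof (rule cov2mapI)
  fix i j show "tpoly (\<lambda>X. outer (f X) (f X) $ i $ j)"
    unfolding outer_def using tpoly_mult[OF cov1mapD(1)[OF assms] cov1mapD(1)[OF assms]] by simp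
next
  fix X show "transpose (outer (f X) (f X)) = outer (f X) (f X)"
    by (simp add: outer_def transpose_def vec_eq_iff mult.commute)
next
  fix g X assume "g \<in> SO3" "X \<in> H4"
  thus "outer (f (act4 g X)) (f (act4 g X)) = g ** outer (f X) (f X) ** transpose g"
    by (simp add: outer_conj cov1mapD(2)[OF assms])
qed

definition crossmat :: "real^3 \<Rightarrow> real^3^3" where
  "crossmat w = vector [vector [0, - w$3, w$2], vector [w$3, 0, - w$1], vector [- w$2, w$1, 0]]"

definition axial :: "real^3^3 \<Rightarrow> real^3" where
  "axial M = vector [M$3$2, M$1$3, M$2$1]"

lemma crossmat_mv: "crossmat w *v x = cross3 w x"
  by (simp add: vec_eq_iff forall_3 cross3_def crossmat_def matrix_vector_mult_def sum_3 vector_3)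

lemma crossmat_rot: assumes "g \<in> SO3" shows "crossmat (g *v w) = g ** crossmat w ** transpose g"
proof -
  have "crossmat (g *v w) *v x = (g ** crossmat w ** transpose g) *v x" for x
  proof -
    have xe: "g *v (transpose g *v x) = x"
      by (simp only: matrix_vector_mul_assoc SO3_D(4)[OF assms] matrix_vector_mul_lid)
    have "crossmat (g *v w) *v x = cross3 (g *v w) (g *v (transpose g *v x))"
      by (simp only: crossmat_mv xe)
    also have "\<dots> = g *v cross3 w (transpose g *v x)"
      using cross_rotation_matrix[OF SO3_D(5)[OF assms]] by simp
    also have "\<dots> = (g ** crossmat w ** transpose g) *v x"
      by (simp only: crossmat_mv[symmetric] matrix_vector_mul_assoc matrix_mul_assoc)
    finally show ?thesis .
  qed
  thus ?thesis by (simp add: matrix_eq)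
qed

lemma antisym_entries: assumes "transpose M = - (M::real^3^3)" shows "M$j$i = - M$i$j"
proof -
  have "(transpose M)$j$i = (- M)$j$i" using assms by simp
  thus ?thesis by (simp add: transpose_def)
qed

lemma crossmat_axial: assumes "transpose M = - (M::real^3^3)" shows "crossmat (axial M) = M"
proof -
  have d: "M$i$i = 0" for i using antisym_entries[OF assms, of i i] by simp
  note e = antisym_entries[OF assms]
  show ?thesis
    by (simp add: vec_eq_iff forall_3 crossmat_def axial_def vector_3 d e[of 1 2] e[of 1 3] e[of 2 3])
qed

lemma axial_crossmat: "axial (crossmat w) = w"
  by (simp add: vec_eq_iff forall_3 crossmat_def axial_def vector_3)

lemma transpose_crossmat: "transpose (crossmat w) = - crossmat w"
  by (simp add: vec_eq_iff forall_3 crossmat_def transpose_def vector_3)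

lemma axial_conj: assumes "g \<in> SO3" "transpose M = - (M::real^3^3)"
  shows "axial (g ** M ** transpose g) = g *v axial M"
proof -
  have "g ** M ** transpose g = crossmat (g *v axial M)"
    using crossmat_rot[OF assms(1)] crossmat_axial[OF assms(2)] by simp
  thus ?thesis by (simp add: axial_crossmat)
qed

lemma conj_mult: assumes "g \<in> SO3"
  shows "(g ** A ** transpose g) ** (g ** B ** transpose g) = g ** (A ** B) ** transpose g"
proof -
  have "(g ** A ** transpose g) ** (g ** B ** transpose g) = g ** A ** (transpose g ** g) ** B ** transpose g"
    by (simp add: matrix_mul_assoc)
  thus ?thesis by (simp add: SO3_D[OF assms] matrix_mul_assoc)
qed

lemma conj_diff: "g ** (A - B) ** transpose g = g ** A ** transpose g - g ** B ** (transpose g :: real^3^3)"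
  by (simp add: matrix_diff_ldistrib matrix_diff_rdistrib)

lemma tpoly_vec3: "tpoly (\<lambda>X. f X $ 1) \<Longrightarrow> tpoly (\<lambda>X. f X $ 2) \<Longrightarrow> tpoly (\<lambda>X. f X $ 3) \<Longrightarrow> tpoly (\<lambda>X. f X $ (i::3))"
  using exhaust_3[of i] by auto

lemma tpoly_neg: "tpoly p \<Longrightarrow> tpoly (\<lambda>X. - p X)"
  using tpoly_scale[of p "-1"] by simp

lemma cov1_axial: assumes "cov2map A" "cov2map B"
  shows "cov1map (\<lambda>X. axial (A X ** B X - B X ** A X))"
proof (rule cov1mapI)
  fix i
  have m: "tpoly (\<lambda>X. (A X ** B X) $ a $ b - (B X ** A X) $ a $ b)" for a b
    by (rule tpoly_diff[OF tpoly_mm[OF cov2mapD(1)[OF assms(1)] cov2mapD(1)[OF assms(2)]] tpoly_mm[OF cov2mapD(1)[OF assms(2)] cov2mapD(1)[OF assms(1)]]])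
  show "tpoly (\<lambda>X. axial (A X ** B X - B X ** A X) $ i)"
    by (rule tpoly_vec3) (simp_all add: axial_def vector_3 m)
next
  fix g X assume g: "g \<in> SO3" and X: "X \<in> H4"
  have as: "transpose (A X ** B X - B X ** A X) = - (A X ** B X - B X ** A X)"
    using cov2mapD(2)[OF assms(1) X] cov2mapD(2)[OF assms(2) X]
    by (simp add: transpose_diff matrix_transpose_mul)
  have "A (act4 g X) ** B (act4 g X) - B (act4 g X) ** A (act4 g X) = g ** (A X ** B X - B X ** A X) ** transpose g"
    using cov2mapD(3)[OF assms(1) g X] cov2mapD(3)[OF assms(2) g X] by (simp add: conj_mult[OF g] conj_diff)
  thus "axial (A (act4 g X) ** B (act4 g X) - B (act4 g X) ** A (act4 g X)) = g *v axial (A X ** B X - B X ** A X)"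
    using axial_conj[OF g as] by simp
qed

lemma mm_neg_r: "A ** (- B) = - (A ** (B::real^3^3))"
  by (simp add: matrix_matrix_mult_def vec_eq_iff sum_negf)
lemma mm_neg_l: "(- A) ** B = - (A ** (B::real^3^3))"
  by (simp add: matrix_matrix_mult_def vec_eq_iff sum_negf)

definition skc :: "real^3 \<Rightarrow> real^3^3 \<Rightarrow> real^3^3" where
  "skc v A = crossmat v ** A - A ** crossmat v"

lemma tpoly_crossmat: assumes "\<And>i. tpoly (\<lambda>X. f X $ i)" shows "tpoly (\<lambda>X. crossmat (f X) $ i $ j)"
proof -
  have z: "tpoly (\<lambda>X. 0)" by (rule tpoly_const)
  show ?thesis using exhaust_3[of i] exhaust_3[of j]
    by (auto simp: crossmat_def vector_3 intro!: z assms tpoly_neg)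
qed

lemma cov2_skc: assumes "cov1map f" "cov2map A" shows "cov2map (\<lambda>X. skc (f X) (A X))"
proof (rule cov2mapI)
  fix i j
  have c: "\<And>i j. tpoly (\<lambda>X. crossmat (f X) $ i $ j)" by (rule tpoly_crossmat[OF cov1mapD(1)[OF assms(1)]])
  show "tpoly (\<lambda>X. skc (f X) (A X) $ i $ j)"
    using tpoly_diff[OF tpoly_mm[OF c cov2mapD(1)[OF assms(2)]] tpoly_mm[OF cov2mapD(1)[OF assms(2)] c]]
    by (simp add: skc_def)
next
  fix X assume X: "X \<in> H4"
  show "transpose (skc (f X) (A X)) = skc (f X) (A X)"
    using cov2mapD(2)[OF assms(2) X]
    by (simp add: skc_def transpose_diff matrix_transpose_mul transpose_crossmat mm_neg_r mm_neg_l)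
next
  fix g X assume g: "g \<in> SO3" and X: "X \<in> H4"
  show "skc (f (act4 g X)) (A (act4 g X)) = g ** skc (f X) (A X) ** transpose g"
    using cov1mapD(2)[OF assms(1) g X] cov2mapD(3)[OF assms(2) g X]
    by (simp add: skc_def crossmat_rot[OF g] conj_mult[OF g] conj_diff)
qed

lemma tpoly_coord': "tpoly (\<lambda>X. X i j k l)" by (rule tpoly_coord)

lemma cov2_c2: assumes "cov1map f" shows "cov2map (\<lambda>X. c2 X (f X))"
proof (rule cov2mapI)
  fix i j
  show "tpoly (\<lambda>X. c2 X (f X) $ i $ j)"
    unfolding c2_def
    by (simp, intro tpoly_sum tpoly_mult tpoly_coord' cov1mapD(1)[OF assms]) auto
next
  fix X assume X: "X \<in> H4"
  show "transpose (c2 X (f X)) = c2 X (f X)"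
    by (simp add: c2_def transpose_def vec_eq_iff H4_D(1)[OF X])
next
  fix g X assume g: "g \<in> SO3" and X: "X \<in> H4"
  show "c2 (act4 g X) (f (act4 g X)) = g ** c2 X (f X) ** transpose g"
    by (simp add: cov1mapD(2)[OF assms g X] c2_equiv SO3_D(1)[OF g])
qed

lemma cov2_dd: "cov2map dd"
proof (rule cov2mapI)
  fix i j
  show "tpoly (\<lambda>X. dd X $ i $ j)"
    unfolding dd_def
    by (simp, intro tpoly_sum tpoly_mult tpoly_coord') auto
next
  fix X assume X: "X \<in> H4"
  show "transpose (dd X) = dd X"
    by (simp add: dd_def transpose_def vec_eq_iff mult.commute)
next
  fix g X assume g: "g \<in> SO3" and X: "X \<in> H4"
  show "dd (act4 g X) = g ** dd X ** transpose g"
    by (simp add: dd_equiv SO3_D(1)[OF g])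
qed

lemma Cov1I: "cov1map f \<Longrightarrow> f H \<in> Cov1 H"
  unfolding Cov1_eq by blast
lemma Cov1E: "v \<in> Cov1 H \<Longrightarrow> (\<And>f. cov1map f \<Longrightarrow> v = f H \<Longrightarrow> P) \<Longrightarrow> P"
  unfolding Cov1_eq by blast
lemma Cov2I: "cov2map f \<Longrightarrow> f H \<in> Cov2 H"
  unfolding Cov2_eq by blast
lemma Cov2E: "A \<in> Cov2 H \<Longrightarrow> (\<And>f. cov2map f \<Longrightarrow> A = f H \<Longrightarrow> P) \<Longrightarrow> P"
  unfolding Cov2_eq by blast

lemma Cov1_act: assumes "g \<in> SO3" "H \<in> H4"
  shows "Cov1 (act4 g H) = (\<lambda>v. g *v v) ` Cov1 H"
proof (intro set_eqI iffI)
  fix x assume "x \<in> Cov1 (act4 g H)"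
  then obtain f where f: "cov1map f" "x = f (act4 g H)" by (rule Cov1E)
  hence "x = g *v f H" using cov1mapD(2)[OF f(1) assms] by simp
  thus "x \<in> (\<lambda>v. g *v v) ` Cov1 H" using Cov1I[OF f(1)] by blast
next
  fix x assume "x \<in> (\<lambda>v. g *v v) ` Cov1 H"
  then obtain v where v: "v \<in> Cov1 H" "x = g *v v" by blast
  then obtain f where f: "cov1map f" "v = f H" by (auto elim: Cov1E)
  hence "x = f (act4 g H)" using cov1mapD(2)[OF f(1) assms] v by simp
  thus "x \<in> Cov1 (act4 g H)" using Cov1I[OF f(1)] by simp
qed

lemma Cov2_act: assumes "g \<in> SO3" "H \<in> H4"
  shows "Cov2 (act4 g H) = (\<lambda>A. g ** A ** transpose g) ` Cov2 H"
proof (intro set_eqI iffI)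
  fix x assume "x \<in> Cov2 (act4 g H)"
  then obtain f where f: "cov2map f" "x = f (act4 g H)" by (rule Cov2E)
  hence "x = g ** f H ** transpose g" using cov2mapD(3)[OF f(1) assms] by simp
  thus "x \<in> (\<lambda>A. g ** A ** transpose g) ` Cov2 H" using Cov2I[OF f(1)] by blast
next
  fix x assume "x \<in> (\<lambda>A. g ** A ** transpose g) ` Cov2 H"
  then obtain v where v: "v \<in> Cov2 H" "x = g ** v ** transpose g" by blast
  then obtain f where f: "cov2map f" "v = f H" by (auto elim: Cov2E)
  hence "x = f (act4 g H)" using cov2mapD(3)[OF f(1) assms] v by simp
  thus "x \<in> Cov2 (act4 g H)" using Cov2I[OF f(1)] by simp
qed

context
  fixes H :: tensor4
  assumes HH: "H \<in> H4"
begin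

lemma V_zero: "0 \<in> Cov1 H"
  using Cov1I[OF cov1_zero] by simp

lemma V_add: assumes "v \<in> Cov1 H" "w \<in> Cov1 H" shows "v + w \<in> Cov1 H"
proof -
  obtain f where f: "cov1map f" "v = f H" using assms(1) by (rule Cov1E)
  obtain h where h: "cov1map h" "w = h H" using assms(2) by (rule Cov1E)
  show ?thesis using Cov1I[OF cov1_add[OF f(1) h(1)]] f h by simp
qed

lemma V_scale: assumes "v \<in> Cov1 H" shows "c *\<^sub>R v \<in> Cov1 H"
proof -
  obtain f where f: "cov1map f" "v = f H" using assms(1) by (rule Cov1E)
  show ?thesis using Cov1I[OF cov1_scale[OF f(1)]] f by simp
qed

lemma V_subspace: "subspace (Cov1 H)"
  unfolding subspace_def using V_zero V_add V_scale by blast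

lemma W_add: assumes "A \<in> Cov2 H" "B \<in> Cov2 H" shows "A + B \<in> Cov2 H"
proof -
  obtain f where f: "cov2map f" "A = f H" using assms(1) by (rule Cov2E)
  obtain h where h: "cov2map h" "B = h H" using assms(2) by (rule Cov2E)
  show ?thesis using Cov2I[OF cov2_add[OF f(1) h(1)]] f h by simp
qed

lemma W_scale: assumes "A \<in> Cov2 H" shows "c *\<^sub>R A \<in> Cov2 H"
proof -
  obtain f where f: "cov2map f" "A = f H" using assms(1) by (rule Cov2E)
  show ?thesis using Cov2I[OF cov2_scale[OF f(1)]] f by simp
qed

lemma W_id: "mat 1 \<in> Cov2 H"
  using Cov2I[OF cov2_id] by simp

lemma W_sym: assumes "A \<in> Cov2 H" shows "transpose A = A"
proof -
  obtain f where f: "cov2map f" "A = f H" using assms(1) by (rule Cov2E)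
  show ?thesis using cov2mapD(2)[OF f(1) HH] f by simp
qed

lemma V_cross: assumes "v \<in> Cov1 H" "w \<in> Cov1 H" shows "cross3 v w \<in> Cov1 H"
proof -
  obtain f where f: "cov1map f" "v = f H" using assms(1) by (rule Cov1E)
  obtain h where h: "cov1map h" "w = h H" using assms(2) by (rule Cov1E)
  show ?thesis using Cov1I[OF cov1_cross[OF f(1) h(1)]] f h by simp
qed

lemma V_mv: assumes "A \<in> Cov2 H" "v \<in> Cov1 H" shows "A *v v \<in> Cov1 H"
proof -
  obtain f where f: "cov2map f" "A = f H" using assms(1) by (rule Cov2E)
  obtain h where h: "cov1map h" "v = h H" using assms(2) by (rule Cov1E)
  show ?thesis using Cov1I[OF cov1_mv[OF f(1) h(1)]] f h by simp
qed

lemma W_outer: assumes "v \<in> Cov1 H" shows "outer v v \<in> Cov2 H"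
proof -
  obtain h where h: "cov1map h" "v = h H" using assms by (rule Cov1E)
  show ?thesis using Cov2I[OF cov2_outer[OF h(1)]] h by simp
qed

lemma W_c2: assumes "v \<in> Cov1 H" shows "c2 H v \<in> Cov2 H"
proof -
  obtain h where h: "cov1map h" "v = h H" using assms by (rule Cov1E)
  show ?thesis using Cov2I[OF cov2_c2[OF h(1)]] h by simp
qed

lemma W_dd: "dd H \<in> Cov2 H"
  using Cov2I[OF cov2_dd] by simp

lemma W_skc: assumes "v \<in> Cov1 H" "A \<in> Cov2 H" shows "skc v A \<in> Cov2 H"
proof -
  obtain h where h: "cov1map h" "v = h H" using assms(1) by (rule Cov1E)
  obtain f where f: "cov2map f" "A = f H" using assms(2) by (rule Cov2E)
  show ?thesis using Cov2I[OF cov2_skc[OF h(1) f(1)]] f h by simp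
qed

lemma V_axial: assumes "A \<in> Cov2 H" "B \<in> Cov2 H" shows "axial (A ** B - B ** A) \<in> Cov1 H"
proof -
  obtain f where f: "cov2map f" "A = f H" using assms(1) by (rule Cov2E)
  obtain h where h: "cov2map h" "B = h H" using assms(2) by (rule Cov2E)
  show ?thesis using Cov1I[OF cov1_axial[OF f(1) h(1)]] f h by simp
qed

lemma V_fix: assumes "g \<in> SO3" "act4 g H = H" "v \<in> Cov1 H" shows "g *v v = v"
proof -
  obtain h where h: "cov1map h" "v = h H" using assms(3) by (rule Cov1E)
  show ?thesis using cov1mapD(2)[OF h(1) assms(1) HH] assms(2) h by simp
qed

end

lemma QUAD: fixes b c :: real assumes "\<And>t. 2*t*b + t^2*c \<le> 0" shows "b = 0"
proof -
  define r where "r = \<bar>c\<bar> + 1"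
  have r: "r > 0" "2 * r + c > 0" unfolding r_def by auto
  have "2 * (b / r) * b + (b / r)^2 * c \<le> 0" by (rule assms)
  hence "(2 * (b / r) * b + (b / r)^2 * c) * r^2 \<le> 0" by (simp add: mult_nonpos_nonneg)
  moreover have "(2 * (b / r) * b + (b / r)^2 * c) * r^2 = b * b * (2 * r + c)"
    using r by (simp add: field_simps power2_eq_square)
  ultimately have "b * b * (2 * r + c) \<le> 0" by simp
  hence "b * b \<le> 0" using r(2) by (simp add: mult_le_0_iff)
  thus ?thesis by (simp add: mult_le_0_iff) linarith
qed

lemma sym_inner: assumes "transpose A = (A::real^3^3)" shows "x \<bullet> (A *v y) = (A *v x) \<bullet> y"
  by (metis assms dot_lmul_matrix transpose_matrix_vector)

lemma eig_exists:
  fixes A :: "real^3^3" and L :: "(real^3) set"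
  assumes sym: "transpose A = A" and L: "subspace L" "L \<noteq> {0}" and inv: "\<And>x. x \<in> L \<Longrightarrow> A *v x \<in> L"
  shows "\<exists>x\<in>L. norm x = 1 \<and> A *v x = (x \<bullet> (A *v x)) *\<^sub>R x"
proof -
  define K where "K = L \<inter> sphere 0 1"
  have "compact K" unfolding K_def
    by (intro closed_Int_compact closed_subspace L(1) compact_sphere)
  obtain y where y: "y \<in> L" "y \<noteq> 0" using L subspace_0 by blast
  have "(1 / norm y) *\<^sub>R y \<in> K" using y L(1) unfolding K_def by (simp add: subspace_scale)
  hence "K \<noteq> {}" by blast
  have "continuous_on K (\<lambda>x. x \<bullet> (A *v x))"
    by (intro continuous_intros linear_continuous_on matrix_vector_mul_linear)
  then obtain x where x: "x \<in> K" and xmax: "\<And>z. z \<in> K \<Longrightarrow> z \<bullet> (A *v z) \<le> x \<bullet> (A *v x)"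
    using continuous_attains_sup[OF \<open>compact K\<close> \<open>K \<noteq> {}\<close>] by blast
  have xL: "x \<in> L" and nx: "norm x = 1" using x unfolding K_def by auto
  have xx: "x \<bullet> x = 1" using nx by (simp add: norm_eq_1)
  define m where "m = x \<bullet> (A *v x)"
  define y where "y = A *v x - m *\<^sub>R x"
  have yL: "y \<in> L" unfolding y_def using inv[OF xL] xL L(1) by (simp add: subspace_diff subspace_scale)
  have "y \<bullet> x = (A *v x) \<bullet> x - m * (x \<bullet> x)" unfolding y_def by (simp add: inner_diff_left)
  moreover have "(A *v x) \<bullet> x = m" unfolding m_def by (simp add: inner_commute)
  ultimately have yx: "y \<bullet> x = 0" using xx by simp
  have key: "2*t*(y \<bullet> (A *v x)) + t^2*(y \<bullet> (A *v y) - m * (y \<bullet> y)) \<le> 0" for t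
  proof -
    define z where "z = x + t *\<^sub>R y"
    have zL: "z \<in> L" unfolding z_def using xL yL L(1) by (simp add: subspace_add subspace_scale)
    have zz: "z \<bullet> z = 1 + t^2 * (y \<bullet> y)"
      unfolding z_def using xx yx by (simp add: inner_add_left inner_add_right inner_commute power2_eq_square)
    hence zpos: "z \<bullet> z > 0" by (simp add: add_pos_nonneg)
    hence nz: "norm z > 0" by (simp add: inner_gt_zero_iff)
    have "(1 / norm z) *\<^sub>R z \<in> K" using zL nz L(1) unfolding K_def by (simp add: subspace_scale)
    hence "((1 / norm z) *\<^sub>R z) \<bullet> (A *v ((1 / norm z) *\<^sub>R z)) \<le> m" using xmax m_def by blast
    hence "(z \<bullet> (A *v z)) / (norm z)^2 \<le> m"
      by (simp add: matrix_vector_mult_scaleR power2_eq_square)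
    hence "z \<bullet> (A *v z) \<le> m * (z \<bullet> z)" using nz by (simp add: divide_le_eq power2_norm_eq_inner)
    moreover have "z \<bullet> (A *v z) = m + 2*t*(y \<bullet> (A *v x)) + t^2*(y \<bullet> (A *v y))"
      unfolding z_def m_def
      by (simp add: inner_add_left inner_add_right matrix_vector_right_distrib matrix_vector_mult_scaleR
          sym_inner[OF sym, of x y] inner_commute power2_eq_square algebra_simps)
    ultimately show ?thesis using zz by (simp add: algebra_simps)
  qed
  have "y \<bullet> (A *v x) = 0" by (rule QUAD[OF key])
  moreover have "y \<bullet> (A *v x) = y \<bullet> y" unfolding y_def using yx[unfolded y_def]
    by (simp add: inner_diff_left inner_diff_right algebra_simps)
  ultimately have "y = 0" by simp
  hence "A *v x = m *\<^sub>R x" unfolding y_def by simp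
  thus ?thesis using xL nx m_def by blast
qed

definition invsub :: "(real^3^3) set \<Rightarrow> (real^3) set \<Rightarrow> (real^3) set \<Rightarrow> bool" where
  "invsub F M L \<longleftrightarrow> subspace L \<and> L \<subseteq> M \<and> L \<noteq> {0} \<and> (\<forall>A\<in>F. \<forall>x\<in>L. A *v x \<in> L)"

lemma common_eig:
  fixes F :: "(real^3^3) set" and M :: "(real^3) set"
  assumes sym: "\<And>A. A \<in> F \<Longrightarrow> transpose A = A"
    and comm: "\<And>A B. A \<in> F \<Longrightarrow> B \<in> F \<Longrightarrow> A ** B = B ** A"
    and M: "subspace M" "M \<noteq> {0}" and inv: "\<And>A x. A \<in> F \<Longrightarrow> x \<in> M \<Longrightarrow> A *v x \<in> M"
  shows "\<exists>x\<in>M. norm x = 1 \<and> (\<forall>A\<in>F. \<exists>c. A *v x = c *\<^sub>R x)"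
proof -
  have PM: "invsub F M M" unfolding invsub_def using M inv by auto
  define n where "n = (LEAST n. \<exists>L. invsub F M L \<and> dim L = n)"
  have "\<exists>L. invsub F M L \<and> dim L = n" unfolding n_def
    by (rule LeastI_ex) (use PM in blast)
  then obtain L where PL: "invsub F M L" and dL: "dim L = n" by blast
  have minimal: "dim L \<le> dim L'" if "invsub F M L'" for L'
    unfolding dL n_def by (rule Least_le) (use that in blast)
  have Lsub: "subspace L" and LM: "L \<subseteq> M" and Lnz: "L \<noteq> {0}" and Linv: "\<And>A x. A \<in> F \<Longrightarrow> x \<in> L \<Longrightarrow> A *v x \<in> L"
    using PL unfolding invsub_def by auto
  have scal: "\<exists>c. \<forall>x\<in>L. A *v x = c *\<^sub>R x" if AF: "A \<in> F" for A
  proof -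
    obtain x0 where x0: "x0 \<in> L" "norm x0 = 1" "A *v x0 = (x0 \<bullet> (A *v x0)) *\<^sub>R x0"
      using eig_exists[OF sym[OF AF] Lsub Lnz Linv[OF AF]] by blast
    define c where "c = x0 \<bullet> (A *v x0)"
    define L' where "L' = {x \<in> L. A *v x = c *\<^sub>R x}"
    have "subspace L'" unfolding L'_def subspace_def using Lsub
      by (auto simp: subspace_0 subspace_add subspace_scale matrix_vector_right_distrib
          matrix_vector_mult_scaleR scaleR_add_right)
    moreover have "L' \<subseteq> M" unfolding L'_def using LM by auto
    moreover have "L' \<noteq> {0}"
    proof
      assume "L' = {0}"
      moreover have "x0 \<in> L'" using x0 c_def unfolding L'_def by simp
      ultimately have "x0 = 0" by blast
      thus False using x0(2) by simp
    qed
    moreover have "\<forall>B\<in>F. \<forall>x\<in>L'. B *v x \<in> L'"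
    proof (intro ballI)
      fix B x assume B: "B \<in> F" and x: "x \<in> L'"
      have "A *v (B *v x) = B *v (A *v x)" by (simp add: matrix_vector_mul_assoc comm[OF AF B])
      also have "\<dots> = c *\<^sub>R (B *v x)" using x unfolding L'_def by (simp add: matrix_vector_mult_scaleR)
      finally show "B *v x \<in> L'" using Linv[OF B] x unfolding L'_def by auto
    qed
    ultimately have "invsub F M L'" unfolding invsub_def by blast
    hence "dim L \<le> dim L'" by (rule minimal)
    moreover have "L' \<subseteq> L" unfolding L'_def by auto
    ultimately have "L' = L" using subspace_dim_equal[OF \<open>subspace L'\<close> Lsub] by simp
    thus ?thesis unfolding L'_def by blast
  qed
  obtain y where y: "y \<in> L" "y \<noteq> 0" using Lnz Lsub subspace_0 by blast
  define x where "x = (1 / norm y) *\<^sub>R y"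
  have "x \<in> L" unfolding x_def using y Lsub by (simp add: subspace_scale)
  moreover have "norm x = 1" unfolding x_def using y by simp
  moreover have "\<forall>A\<in>F. \<exists>c. A *v x = c *\<^sub>R x" using scal \<open>x \<in> L\<close> by blast
  ultimately show ?thesis using LM by blast
qed

lemma cross_cross_right: "cross3 x (cross3 y z) = (x \<bullet> z) *\<^sub>R y - (x \<bullet> y) *\<^sub>R z"
  by (simp add: cross3_simps forall_3 vector_3)

lemma cross_cross_left: "cross3 (cross3 x y) z = (x \<bullet> z) *\<^sub>R y - (y \<bullet> z) *\<^sub>R x"
  by (simp add: cross3_simps forall_3 vector_3)

lemma norm_cross_unit: assumes "norm e = 1" "norm a = 1" "e \<bullet> a = 0" shows "norm (cross3 e a) = 1"
proof -
  have "(norm (cross3 e a))^2 = 1" using norm_cross_dot[of e a] assms by simp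
  hence "norm (cross3 e a) = 1 \<or> norm (cross3 e a) = -1" by (simp add: power2_eq_1_iff)
  thus ?thesis using norm_ge_zero[of "cross3 e a"] by linarith
qed

lemma perp2: assumes "norm e = 1" "norm a = 1" "e \<bullet> a = 0" "z \<bullet> e = 0" "z \<bullet> a = 0"
  shows "z = (z \<bullet> cross3 e a) *\<^sub>R cross3 e a"
proof -
  define b where "b = cross3 e a"
  have bb: "b \<bullet> b = 1" using norm_cross_unit[OF assms(1-3)] unfolding b_def by (simp add: norm_eq_1)
  have "cross3 z b = 0" unfolding b_def using assms(4,5) by (simp add: cross_cross_right)
  hence "cross3 b (cross3 z b) = 0" by simp
  hence "(b \<bullet> b) *\<^sub>R z - (b \<bullet> z) *\<^sub>R b = 0" by (simp add: cross_cross_right)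
  hence "z = (b \<bullet> z) *\<^sub>R b" using bb by simp
  thus ?thesis unfolding b_def by (simp add: inner_commute)
qed

lemma orth_exists: fixes e :: "real^3" assumes "norm e = 1" shows "\<exists>u. norm u = 1 \<and> u \<bullet> e = 0"
proof -
  have "cross3 e (axis 1 1) \<noteq> 0 \<or> cross3 e (axis 2 1) \<noteq> 0"
  proof (rule ccontr)
    assume "\<not> ?thesis"
    hence "cross3 e (axis 1 1) = 0" "cross3 e (axis 2 1) = 0" by auto
    hence "e = 0" by (simp add: cross3_def vec_eq_iff forall_3 vector_3 axis_def)
    thus False using assms by simp
  qed
  then obtain w where w: "w \<noteq> 0" "w \<bullet> e = 0"
    using dot_cross_self by blast
  define u where "u = (1 / norm w) *\<^sub>R w"
  have "norm u = 1" "u \<bullet> e = 0" unfolding u_def using w by auto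
  thus ?thesis by blast
qed

definition frame :: "real^3 \<Rightarrow> real^3 \<Rightarrow> real^3^3" where
  "frame u n = vector [u, cross3 n u, n]"

lemma frame_rows: "frame u n $ 1 = u" "frame u n $ 2 = cross3 n u" "frame u n $ 3 = n"
  by (simp_all add: frame_def vector_3)

lemma mv_rows: "((Q::real^3^3) *v x) $ i = Q$i \<bullet> x"
  by (simp add: matrix_vector_mult_def inner_vec_def mult.commute)

lemma tmv_rows: "(transpose (Q::real^3^3) *v y) = y$1 *\<^sub>R Q$1 + y$2 *\<^sub>R Q$2 + y$3 *\<^sub>R Q$3"
  by (simp add: vec_eq_iff matrix_vector_mult_def transpose_def sum_3 mult.commute)

lemma frame_SO3: assumes "norm u = 1" "norm n = 1" "u \<bullet> n = 0"
  shows "frame u n \<in> SO3"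
proof -
  have nu: "norm (cross3 n u) = 1" by (rule norm_cross_unit) (use assms in \<open>auto simp: inner_commute\<close>)
  have r: "row i (frame u n) = frame u n $ i" for i by (simp add: row_def vec_eq_iff)
  have o: "orthogonal_matrix (frame u n)"
    unfolding orthogonal_matrix_orthonormal_rows r
  proof (intro conjI allI impI)
    fix i :: 3 show "norm (frame u n $ i) = 1"
      using exhaust_3[of i] assms nu by (auto simp: frame_rows)
  next
    fix i j :: 3 assume "i \<noteq> j"
    thus "orthogonal (frame u n $ i) (frame u n $ j)"
      using exhaust_3[of i] exhaust_3[of j] assms
      by (auto simp: frame_rows orthogonal_def dot_cross_self inner_commute)
  qed
  have "det (frame u n) = u \<bullet> cross3 (cross3 n u) n"
    by (simp add: dot_cross_det frame_def)
  also have "\<dots> = 1" using assms by (simp add: cross_cross_left inner_commute norm_eq_1)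
  finally show ?thesis using o unfolding SO3_def by simp
qed

lemma frame_mv: assumes "norm u = 1" "norm n = 1" "u \<bullet> n = 0"
  shows "frame u n *v n = axis 3 1" "frame u n *v u = axis 1 1"
  using assms by (auto simp: vec_eq_iff forall_3 mv_rows frame_rows axis_def dot_cross_self inner_commute norm_eq_1)

lemma frame_tmv: "transpose (frame u n) *v vector [c, s, 0] = c *\<^sub>R u + s *\<^sub>R cross3 n u"
  "transpose (frame u n) *v axis 3 1 = n"
  by (simp_all only: tmv_rows) (simp_all add: frame_rows vector_3 axis_def)

lemma conj_entry: "((Q::real^3^3) ** A ** transpose Q)$i$j = (Q$i) \<bullet> (A *v (Q$j))"
proof -
  have "((Q::real^3^3) ** A ** transpose Q)$i$j = (\<Sum>k\<in>UNIV. \<Sum>l\<in>UNIV. Q$i$l * (A$l$k * Q$j$k))"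
    by (simp add: matrix_matrix_mult_def transpose_def sum_distrib_right sum_distrib_left mult_ac)
  also have "\<dots> = (\<Sum>l\<in>UNIV. \<Sum>k\<in>UNIV. Q$i$l * (A$l$k * Q$j$k))" by (rule sum.swap)
  also have "\<dots> = (Q$i) \<bullet> (A *v (Q$j))"
    by (simp add: inner_vec_def matrix_vector_mult_def sum_distrib_left)
  finally show ?thesis .
qed

lemma comm_frame:
  fixes F :: "(real^3^3) set"
  assumes sym: "\<And>A. A \<in> F \<Longrightarrow> transpose A = A"
    and comm: "\<And>A B. A \<in> F \<Longrightarrow> B \<in> F \<Longrightarrow> A ** B = B ** A"
  shows "\<exists>Q\<in>SO3. \<forall>A\<in>F. \<forall>i j. i \<noteq> j \<longrightarrow> (Q ** A ** transpose Q)$i$j = 0"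
proof -
  have U: "(UNIV :: (real^3) set) \<noteq> {0}"
  proof
    assume "(UNIV :: (real^3) set) = {0}"
    hence "axis 1 (1::real) = (0::real^3)" by blast
    thus False by (simp add: axis_eq_0_iff)
  qed
  have inv: "\<And>A x. A \<in> F \<Longrightarrow> x \<in> UNIV \<Longrightarrow> A *v x \<in> (UNIV::(real^3) set)" by simp
  obtain e where e: "norm e = 1" and ee0: "\<forall>A\<in>F. \<exists>c. A *v e = c *\<^sub>R e"
    using common_eig[OF sym comm subspace_UNIV U inv] by blast
  have ee: "\<And>A. A \<in> F \<Longrightarrow> \<exists>c. A *v e = c *\<^sub>R e" using ee0 by blast
  define P where "P = {x::real^3. x \<bullet> e = 0}"
  have Psub: "subspace P" unfolding P_def subspace_def by (auto simp: inner_add_left)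
  obtain u where u: "norm u = 1" "u \<bullet> e = 0" using orth_exists[OF e] by blast
  have Pnz: "P \<noteq> {0}"
  proof
    assume "P = {0}" moreover have "u \<in> P" using u P_def by simp
    ultimately show False using u by auto
  qed
  have Pinv: "A *v x \<in> P" if AF: "A \<in> F" and xP: "x \<in> P" for A x
  proof -
    obtain c where c: "A *v e = c *\<^sub>R e" using ee[OF AF] by blast
    have "(A *v x) \<bullet> e = x \<bullet> (A *v e)" by (simp add: sym_inner[OF sym[OF AF]])
    also have "\<dots> = 0" using xP c unfolding P_def by (simp add: inner_commute)
    finally show ?thesis unfolding P_def by simp
  qed
  obtain a where aP: "a \<in> P" and a: "norm a = 1" and aa0: "\<forall>A\<in>F. \<exists>c. A *v a = c *\<^sub>R a"
    using common_eig[OF sym comm Psub Pnz Pinv] by blast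
  have aa: "\<And>A. A \<in> F \<Longrightarrow> \<exists>c. A *v a = c *\<^sub>R a" using aa0 by blast
  have ae: "a \<bullet> e = 0" using aP P_def by simp
  define b where "b = cross3 e a"
  have bb: "\<exists>c. A *v b = c *\<^sub>R b" if AF: "A \<in> F" for A
  proof -
    obtain c where c: "A *v e = c *\<^sub>R e" using ee[OF AF] by blast
    obtain d where d: "A *v a = d *\<^sub>R a" using aa[OF AF] by blast
    have "(A *v b) \<bullet> e = b \<bullet> (A *v e)" by (simp add: sym_inner[OF sym[OF AF]])
    also have "\<dots> = 0" using c unfolding b_def by (simp add: dot_cross_self)
    finally have z1: "(A *v b) \<bullet> e = 0" .
    have "(A *v b) \<bullet> a = b \<bullet> (A *v a)" by (simp add: sym_inner[OF sym[OF AF]])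
    also have "\<dots> = 0" using d unfolding b_def by (simp add: dot_cross_self)
    finally have z2: "(A *v b) \<bullet> a = 0" .
    have "A *v b = ((A *v b) \<bullet> b) *\<^sub>R b"
      unfolding b_def by (rule perp2[OF e a _ z1[unfolded b_def] z2[unfolded b_def]]) (simp add: inner_commute ae)
    thus ?thesis by blast
  qed
  define Q where "Q = frame a e"
  have Q: "Q \<in> SO3" unfolding Q_def by (rule frame_SO3[OF a e ae])
  have eig: "\<exists>c. A *v (Q$j) = c *\<^sub>R (Q$j)" if "A \<in> F" for A j
    using exhaust_3[of j] ee[OF that] aa[OF that] bb[OF that] unfolding Q_def b_def
    by (auto simp: frame_rows)
  have orth: "Q$i \<bullet> Q$j = 0" if "i \<noteq> j" for i j
    using exhaust_3[of i] exhaust_3[of j] that ae unfolding Q_def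
    by (auto simp: frame_rows dot_cross_self inner_commute)
  have "\<forall>A\<in>F. \<forall>i j. i \<noteq> j \<longrightarrow> (Q ** A ** transpose Q)$i$j = 0"
  proof (intro ballI allI impI)
    fix A i j assume A: "A \<in> F" and ij: "i \<noteq> (j::3)"
    obtain c where c: "A *v (Q$j) = c *\<^sub>R (Q$j)" using eig[OF A] by blast
    show "(Q ** A ** transpose Q)$i$j = 0" by (simp add: conj_entry c orth[OF ij])
  qed
  thus ?thesis using Q by blast
qed

lemma D2_cases: "h \<in> D2 \<Longrightarrow> h = mat 1 \<or> h = diag3 1 (-1) (-1) \<or> h = diag3 (-1) 1 (-1) \<or> h = diag3 (-1) (-1) 1"
  unfolding D2_def by auto

lemma diag3_entries: "diag3 a b c $ i $ j = (if i = j then (vector [a,b,c] :: real^3) $ i else 0)"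
  by (simp add: diag3_def)

lemma diag3_SO3: "a*a = 1 \<Longrightarrow> b*b = 1 \<Longrightarrow> c*c = 1 \<Longrightarrow> a*b*c = 1 \<Longrightarrow> diag3 a b c \<in> SO3"
  unfolding SO3_def orthogonal_matrix_def
  by (simp add: vec_eq_iff forall_3 matrix_matrix_mult_def transpose_def sum_3 diag3_def vector_3 mat_def det_3)

lemma mat1_SO3: "mat 1 \<in> SO3"
  unfolding SO3_def by (simp add: orthogonal_matrix_def)

lemma D2_SO3: "D2 \<subseteq> SO3"
  unfolding D2_def using mat1_SO3 diag3_SO3[of 1 "-1" "-1"] diag3_SO3[of "-1" 1 "-1"] diag3_SO3[of "-1" "-1" 1] by auto

lemma SO3_mult: "g \<in> SO3 \<Longrightarrow> h \<in> SO3 \<Longrightarrow> g ** h \<in> SO3"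
  unfolding SO3_def by (simp add: orthogonal_matrix_mul det_mul)

lemma SO3_transpose: "g \<in> SO3 \<Longrightarrow> transpose g \<in> SO3"
  unfolding SO3_def by (simp add: orthogonal_matrix_def)

lemma diag_conj_fix: assumes "h \<in> D2" "\<And>i j. i \<noteq> j \<Longrightarrow> (D::real^3^3)$i$j = 0"
  shows "h ** D ** h = D"
proof -
  have e: "D$1$2 = 0" "D$1$3 = 0" "D$2$1 = 0" "D$2$3 = 0" "D$3$1 = 0" "D$3$2 = 0" using assms(2) by auto
  show ?thesis using D2_cases[OF assms(1)]
    by (auto simp: vec_eq_iff forall_3 matrix_matrix_mult_def sum_3 diag3_def vector_3 mat_def e)
qed

lemma transpose_D2: "h \<in> D2 \<Longrightarrow> transpose h = h"
  using D2_cases[of h] by (auto simp: vec_eq_iff forall_3 transpose_def diag3_def vector_3 mat_def)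

lemma comm_D2:
  fixes W :: "(real^3^3) set"
  assumes hsym: "\<And>A. A \<in> W \<Longrightarrow> transpose A = A"
    and hcomm: "\<And>A B. A \<in> W \<Longrightarrow> B \<in> W \<Longrightarrow> A ** B = B ** A"
  shows "\<exists>g\<in>SO3. conjg g D2 \<subseteq> symgroup W"
proof -
  have ex: "\<exists>Q\<in>SO3. \<forall>A\<in>W. \<forall>i j. i \<noteq> j \<longrightarrow> (Q ** A ** transpose Q)$i$j = 0"
    by (rule comm_frame) (auto intro: hsym hcomm)
  obtain Q where Q: "Q \<in> SO3" and diag0: "\<forall>A\<in>W. \<forall>i j. i \<noteq> j \<longrightarrow> (Q ** A ** transpose Q)$i$j = 0"
    using ex by (elim bexE)
  have diag: "\<And>A i j. A \<in> W \<Longrightarrow> i \<noteq> j \<Longrightarrow> (Q ** A ** transpose Q)$i$j = 0" using diag0 by blast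
  have "conjg (transpose Q) D2 \<subseteq> symgroup W"
  proof
    fix k assume "k \<in> conjg (transpose Q) D2"
    then obtain h where h: "h \<in> D2" and k: "k = transpose Q ** h ** Q" unfolding conjg_def by auto
    have kS: "k \<in> SO3" unfolding k using SO3_mult[OF SO3_mult[OF SO3_transpose[OF Q] subsetD[OF D2_SO3 h]] Q] .
    have "k ** A ** transpose k = A" if A: "A \<in> W" for A
    proof -
      have "k ** A ** transpose k = transpose Q ** h ** (Q ** A ** transpose Q) ** h ** Q"
        unfolding k by (simp add: matrix_transpose_mul transpose_D2[OF h] matrix_mul_assoc)
      also have "\<dots> = transpose Q ** (h ** (Q ** A ** transpose Q) ** h) ** Q"
        by (simp add: matrix_mul_assoc)
      also have "\<dots> = transpose Q ** (Q ** A ** transpose Q) ** Q"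
        using diag_conj_fix[OF h diag[OF A]] by simp
      also have "\<dots> = (transpose Q ** Q) ** A ** (transpose Q ** Q)"
        by (simp add: matrix_mul_assoc)
      also have "\<dots> = A" by (simp add: SO3_D[OF Q])
      finally show ?thesis .
    qed
    thus "k \<in> symgroup W" unfolding symgroup_def using kS by blast
  qed
  thus ?thesis using SO3_transpose[OF Q] by blast
qed

lemma D2_comm:
  fixes W :: "(real^3^3) set"
  assumes g: "g \<in> SO3" and sub: "conjg g D2 \<subseteq> symgroup W" and A: "A \<in> W" and B: "B \<in> W"
  shows "A ** B = B ** A"
proof -
  have h1: "diag3 1 (-1) (-1) \<in> D2" and h2: "diag3 (-1) 1 (-1) \<in> D2" unfolding D2_def by auto
  have fix_h: "h ** (transpose g ** C ** g) ** h = transpose g ** C ** g" if h: "h \<in> D2" and C: "C \<in> W" for h C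
  proof -
    have "g ** h ** transpose g \<in> symgroup W" using sub h unfolding conjg_def by auto
    hence e: "(g ** h ** transpose g) ** C ** transpose (g ** h ** transpose g) = C"
      using C unfolding symgroup_def by auto
    have t: "transpose (g ** h ** transpose g) = g ** h ** transpose g"
      by (simp add: matrix_transpose_mul transpose_D2[OF h] matrix_mul_assoc)
    have "transpose g ** ((g ** h ** transpose g) ** C ** (g ** h ** transpose g)) ** g
      = (transpose g ** g) ** h ** (transpose g ** C ** g) ** h ** (transpose g ** g)"
      by (simp only: matrix_mul_assoc)
    also have "\<dots> = h ** (transpose g ** C ** g) ** h" by (simp add: SO3_D[OF g])
    finally have "h ** (transpose g ** C ** g) ** h = transpose g ** ((g ** h ** transpose g) ** C ** transpose (g ** h ** transpose g)) ** g"
      by (simp add: t)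
    also have "\<dots> = transpose g ** C ** g" using e by simp
    finally show ?thesis .
  qed
  have offdiag: "(transpose g ** C ** g)$i$j = 0" if C: "C \<in> W" and ij: "i \<noteq> j" for C i j
  proof -
    define D where "D = transpose g ** C ** g"
    have d1: "diag3 1 (-1) (-1) ** D ** diag3 1 (-1) (-1) = D" using fix_h[OF h1 C] D_def by simp
    have d2: "diag3 (-1) 1 (-1) ** D ** diag3 (-1) 1 (-1) = D" using fix_h[OF h2 C] D_def by simp
    have "(diag3 1 (-1) (-1) ** D ** diag3 1 (-1) (-1))$i$j = D$i$j" using d1 by simp
    moreover have "(diag3 (-1) 1 (-1) ** D ** diag3 (-1) 1 (-1))$i$j = D$i$j" using d2 by simp
    ultimately show ?thesis unfolding D_def[symmetric]
      using exhaust_3[of i] exhaust_3[of j] ij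
      by (auto simp: matrix_matrix_mult_def sum_3 diag3_def vector_3)
  qed
  define DA where "DA = transpose g ** A ** g"
  define DB where "DB = transpose g ** B ** g"
  have eA: "A = g ** DA ** transpose g"
  proof -
    have "g ** DA ** transpose g = (g ** transpose g) ** A ** (g ** transpose g)" unfolding DA_def by (simp only: matrix_mul_assoc)
    thus ?thesis by (simp add: SO3_D[OF g])
  qed
  have eB: "B = g ** DB ** transpose g"
  proof -
    have "g ** DB ** transpose g = (g ** transpose g) ** B ** (g ** transpose g)" unfolding DB_def by (simp only: matrix_mul_assoc)
    thus ?thesis by (simp add: SO3_D[OF g])
  qed
  have oA: "\<And>i j. i \<noteq> j \<Longrightarrow> DA$i$j = 0" unfolding DA_def using offdiag[OF A] by blast
  have oB: "\<And>i j. i \<noteq> j \<Longrightarrow> DB$i$j = 0" unfolding DB_def using offdiag[OF B] by blast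
  have "DA ** DB = DB ** DA"
  proof -
    have z: "DA$1$2 = 0" "DA$1$3 = 0" "DA$2$1 = 0" "DA$2$3 = 0" "DA$3$1 = 0" "DA$3$2 = 0"
       "DB$1$2 = 0" "DB$1$3 = 0" "DB$2$1 = 0" "DB$2$3 = 0" "DB$3$1 = 0" "DB$3$2 = 0" using oA oB by auto
    show ?thesis by (simp add: vec_eq_iff forall_3 matrix_matrix_mult_def sum_3 z mult.commute)
  qed
  thus ?thesis unfolding eA eB using conj_mult[OF g] by metis
qed

definition Pf :: "tensor4 \<Rightarrow> real \<Rightarrow> real" where
  "Pf X t = X 1 1 1 1 * cos t ^ 4 + 4 * X 1 1 1 2 * cos t ^ 3 * sin t + 6 * X 1 1 2 2 * cos t ^ 2 * sin t ^ 2
     + 4 * X 1 2 2 2 * cos t * sin t ^ 3 + X 2 2 2 2 * sin t ^ 4 + X 1 1 1 3 * cos t ^ 3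
     + 3 * X 1 1 2 3 * cos t ^ 2 * sin t + 3 * X 1 2 2 3 * cos t * sin t ^ 2 + X 2 2 2 3 * sin t ^ 3"

lemma F4_expand: assumes X: "X \<in> H4"
  shows "F4 X (vector [cos t, sin t, 0]) (vector [cos t, sin t, 0]) (vector [cos t, sin t, 0]) (vector [cos t, sin t, 0])
       + F4 X (vector [cos t, sin t, 0]) (vector [cos t, sin t, 0]) (vector [cos t, sin t, 0]) (axis 3 1) = Pf X t"
  unfolding F4_def Pf_def
  by (simp add: sum_3 vector_3 axis_def H4_D(1-3)[OF X] algebra_simps power2_eq_square power3_eq_cube power4_eq_xxxx)

lemma Pf_deriv: "DERIV (Pf X) 0 :> 4 * X 1 1 1 2 + 3 * X 1 1 2 3"
  unfolding Pf_def by (auto intro!: derivative_eq_intros)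


lemma diag_sum: "(\<Sum>a'\<in>UNIV. diag3 a b c $ i $ a' * f a') = (vector [a,b,c] :: real^3) $ i * f i"
proof -
  have "(\<Sum>a'\<in>UNIV. diag3 a b c $ i $ a' * f a') = (\<Sum>a'\<in>UNIV. if i = a' then (vector [a,b,c] :: real^3) $ i * f a' else 0)"
    by (rule sum.cong) (auto simp: diag3_def)
  thus ?thesis by simp
qed

lemma act4_diag: "act4 (diag3 a b c) X i j k l =
   (vector [a,b,c] :: real^3) $ i * (vector [a,b,c] :: real^3) $ j * (vector [a,b,c] :: real^3) $ k * (vector [a,b,c] :: real^3) $ l * X i j k l"
proof -
  let ?d = "(vector [a,b,c] :: real^3)"
  have "act4 (diag3 a b c) X i j k l = (\<Sum>a'\<in>UNIV. diag3 a b c $ i $ a' * (\<Sum>b'\<in>UNIV. diag3 a b c $ j $ b' * (\<Sum>c'\<in>UNIV. diag3 a b c $ k $ c' * (\<Sum>d'\<in>UNIV. diag3 a b c $ l $ d' * X a' b' c' d'))))"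
    by (simp add: act4_def sum_distrib_left mult.assoc)
  also have "\<dots> = ?d $ i * ?d $ j * ?d $ k * ?d $ l * X i j k l"
    by (simp only: diag_sum mult.assoc)
  finally show ?thesis .
qed

lemma AX1: assumes "A ** outer (axis 3 1) (axis 3 1) = outer (axis 3 1) (axis 3 1) ** (A::real^3^3)"
  shows "A$1$3 = 0" "A$2$3 = 0"
proof -
  have "(A ** outer (axis 3 1) (axis 3 1))$1$3 = (outer (axis 3 1) (axis 3 1) ** A)$1$3"
       "(A ** outer (axis 3 1) (axis 3 1))$2$3 = (outer (axis 3 1) (axis 3 1) ** A)$2$3" using assms by simp_all
  thus "A$1$3 = 0" "A$2$3 = 0" by (simp_all add: matrix_matrix_mult_def sum_3 outer_def axis_def)
qed

lemma sym_entries: assumes "transpose M = (M::real^3^3)" shows "M$j$i = M$i$j"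
proof -
  have "(transpose M)$j$i = M$j$i" using assms by simp
  thus ?thesis by (simp add: transpose_def)
qed

lemma AX2: assumes s: "transpose A = (A::real^3^3)" and a13: "A$1$3 = 0" and a23: "A$2$3 = 0"
  and c: "A ** skc (axis 3 1) A = skc (axis 3 1) A ** A"
  shows "A$1$2 = 0" "A$1$1 = A$2$2"
proof -
  have t: "A$3$1 = 0" "A$3$2 = 0" "A$2$1 = A$1$2"
    using sym_entries[OF s, of 1 3] sym_entries[OF s, of 2 3] sym_entries[OF s, of 1 2] a13 a23 by simp_all
  have "(A ** skc (axis 3 1) A)$1$2 = (skc (axis 3 1) A ** A)$1$2" using c by simp
  hence "(A$1$1 - A$2$2)^2 + 4 * (A$1$2)^2 = 0"
    by (simp add: skc_def matrix_matrix_mult_def sum_3 crossmat_def vector_3 axis_def t a13 a23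
        power2_eq_square algebra_simps matrix_diff_ldistrib matrix_diff_rdistrib)
  hence "(A$1$1 - A$2$2)^2 + (2 * A$1$2)^2 = 0" by (simp add: power_mult_distrib)
  hence "A$1$1 - A$2$2 = 0 \<and> 2 * A$1$2 = 0" by (simp only: sum_power2_eq_zero_iff)
  thus "A$1$2 = 0" "A$1$1 = A$2$2" by auto
qed

lemma c2_e3: "c2 X (axis 3 1) $ i $ j = X i j 3 3"
  by (simp add: c2_def axis_def sum_3)

lemma alg_core:
  fixes h1111 h1112 h1113 h1122 h1123 h1133 h1222 h1223 h1233 h1333 h2222 h2223 h2233 h2333 h3333 :: real
  assumes t11: "h1111 + h1122 + h1133 = 0" and t12: "h1112 + h1222 + h1233 = 0"
    and t13: "h1113 + h1223 + h1333 = 0" and t22: "h1122 + h2222 + h2233 = 0"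
    and t23: "h1123 + h2223 + h2333 = 0" and t33: "h1133 + h2233 + h3333 = 0"
    and c1: "h1333 = 0" and c2: "h2333 = 0" and c3: "h1233 = 0" and c4: "h1133 = h2233"
    and d13: "h1111*h1113 + 3*h1112*h1123 + 3*h1113*h1133 + 3*h1122*h1223 + 6*h1123*h1233 + 3*h1133*h1333 + h1222*h2223 + 3*h1223*h2233 + 3*h1233*h2333 + h1333*h3333 = 0"
    and d23: "h1112*h1113 + 3*h1122*h1123 + 3*h1123*h1133 + 3*h1222*h1223 + 6*h1223*h1233 + 3*h1233*h1333 + h2222*h2223 + 3*h2223*h2233 + 3*h2233*h2333 + h2333*h3333 = 0"
    and dv: "4 * h1112 + 3 * h1123 = 0"
  shows "h1112 = 0 \<and> h1123 = 0 \<and> h1222 = 0 \<and> h2223 = 0"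
proof -
  have r1: "h1222 = - h1112" using t12 c3 by simp
  have r2: "h1223 = - h1113" using t13 c1 by simp
  have r3: "h2223 = - h1123" using t23 c2 by simp
  have r4: "h2222 = h1111" using t11 t22 c4 by simp
  define \<alpha> where "\<alpha> = h1111 - 3 * h1122"
  define \<beta> where "\<beta> = 4 * h1112"
  have e1: "\<alpha> * h1113 + \<beta> * h1123 = 0"
    using d13 unfolding \<alpha>_def \<beta>_def r1 r2 r3 c1 c2 c3 c4[symmetric] by (simp add: algebra_simps)
  have e2: "\<beta> * h1113 - \<alpha> * h1123 = 0"
    using d23 unfolding \<alpha>_def \<beta>_def r1 r2 r3 r4 c1 c2 c3 c4[symmetric] by (simp add: algebra_simps)
  have "(\<alpha>^2 + \<beta>^2) * (h1113^2 + h1123^2) = (\<alpha> * h1113 + \<beta> * h1123)^2 + (\<beta> * h1113 - \<alpha> * h1123)^2"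
    by (simp add: algebra_simps power2_eq_square)
  also have "\<dots> = 0" using e1 e2 by simp
  finally have "\<alpha>^2 + \<beta>^2 = 0 \<or> h1113^2 + h1123^2 = 0" by simp
  hence "\<beta> = 0 \<or> h1123 = 0" by (auto simp: sum_power2_eq_zero_iff)
  hence "h1112 = 0 \<and> h1123 = 0" using dv unfolding \<beta>_def by auto
  thus ?thesis using r1 r3 by simp
qed

lemma hard_frame:
  fixes X :: tensor4
  assumes X: "X \<in> H4" and e3: "axis 3 1 \<in> Cov1 X"
    and comm: "\<And>A B. A \<in> Cov2 X \<Longrightarrow> B \<in> Cov2 X \<Longrightarrow> A ** B = B ** A"
    and dv: "4 * X 1 1 1 2 + 3 * X 1 1 2 3 = 0"
  shows False
proof -
  let ?e = "axis 3 1 :: real^3"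
  have E: "outer ?e ?e \<in> Cov2 X" by (rule W_outer[OF X e3])
  define C where "C = c2 X ?e"
  have C: "C \<in> Cov2 X" unfolding C_def by (rule W_c2[OF X e3])
  have Cs: "transpose C = C" by (rule W_sym[OF X C])
  have C13: "C$1$3 = 0" "C$2$3 = 0" using AX1[OF comm[OF C E]] by auto
  have C12: "C$1$2 = 0" "C$1$1 = C$2$2"
    using AX2[OF Cs C13 comm[OF C W_skc[OF X e3 C]]] by auto
  have D: "dd X \<in> Cov2 X" by (rule W_dd[OF X])
  have D13: "dd X $1$3 = 0" "dd X $2$3 = 0" using AX1[OF comm[OF D E]] by auto
  note S = H4_D(1-3)[OF X]
  have tr: "X 1 1 k l + X 2 2 k l + X 3 3 k l = 0" for k l
    using H4_D(4)[OF X, of k l] by (simp add: sum_3)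
  have core: "X 1 1 1 2 = 0 \<and> X 1 1 2 3 = 0 \<and> X 1 2 2 2 = 0 \<and> X 2 2 2 3 = 0"
  proof (rule alg_core)
    show "X 1 1 1 1 + X 1 1 2 2 + X 1 1 3 3 = 0" using tr[of 1 1] by (simp add: S)
    show "X 1 1 1 2 + X 1 2 2 2 + X 1 2 3 3 = 0" using tr[of 1 2] by (simp add: S)
    show "X 1 1 1 3 + X 1 2 2 3 + X 1 3 3 3 = 0" using tr[of 1 3] by (simp add: S)
    show "X 1 1 2 2 + X 2 2 2 2 + X 2 2 3 3 = 0" using tr[of 2 2] by (simp add: S)
    show "X 1 1 2 3 + X 2 2 2 3 + X 2 3 3 3 = 0" using tr[of 2 3] by (simp add: S)
    show "X 1 1 3 3 + X 2 2 3 3 + X 3 3 3 3 = 0" using tr[of 3 3] by (simp add: S)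
    show "X 1 3 3 3 = 0" using C13(1) unfolding C_def c2_e3 by (simp add: S)
    show "X 2 3 3 3 = 0" using C13(2) unfolding C_def c2_e3 by (simp add: S)
    show "X 1 2 3 3 = 0" using C12(1) unfolding C_def c2_e3 by (simp add: S)
    show "X 1 1 3 3 = X 2 2 3 3" using C12(2) unfolding C_def c2_e3 by (simp add: S)
    show "X 1 1 1 1 * X 1 1 1 3 + 3 * X 1 1 1 2 * X 1 1 2 3 + 3 * X 1 1 1 3 * X 1 1 3 3 + 3 * X 1 1 2 2 * X 1 2 2 3 +
      6 * X 1 1 2 3 * X 1 2 3 3 + 3 * X 1 1 3 3 * X 1 3 3 3 + X 1 2 2 2 * X 2 2 2 3 + 3 * X 1 2 2 3 * X 2 2 3 3 +
      3 * X 1 2 3 3 * X 2 3 3 3 + X 1 3 3 3 * X 3 3 3 3 = 0"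
      using D13(1) by (simp add: dd_def sum_3 S algebra_simps)
    show "X 1 1 1 2 * X 1 1 1 3 + 3 * X 1 1 2 2 * X 1 1 2 3 + 3 * X 1 1 2 3 * X 1 1 3 3 + 3 * X 1 2 2 2 * X 1 2 2 3 +
      6 * X 1 2 2 3 * X 1 2 3 3 + 3 * X 1 2 3 3 * X 1 3 3 3 + X 2 2 2 2 * X 2 2 2 3 + 3 * X 2 2 2 3 * X 2 2 3 3 +
      3 * X 2 2 3 3 * X 2 3 3 3 + X 2 3 3 3 * X 3 3 3 3 = 0"
      using D13(2) by (simp add: dd_def sum_3 S algebra_simps)
    show "4 * X 1 1 1 2 + 3 * X 1 1 2 3 = 0" by (rule dv)
  qed
  have z: "X 1 1 1 2 = 0" "X 1 1 2 3 = 0" "X 1 2 2 2 = 0" "X 2 2 2 3 = 0" "X 1 2 3 3 = 0" "X 2 3 3 3 = 0"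
    using core C13(2) C12(1) unfolding C_def c2_e3 by (simp_all add: S)
  define R where "R = diag3 (-1) 1 (-1)"
  have RS: "R \<in> SO3" unfolding R_def by (rule diag3_SO3) auto
  have fixR: "act4 R X = X"
  proof (intro ext)
    fix i j k l :: 3
    show "act4 R X i j k l = X i j k l"
      unfolding R_def act4_diag
      using exhaust_3[of i] exhaust_3[of j] exhaust_3[of k] exhaust_3[of l] z
      by (auto simp: vector_3 S)
  qed
  have "R *v ?e = ?e" by (rule V_fix[OF X RS fixR e3])
  moreover have "R *v ?e = - ?e"
    unfolding R_def by (simp add: vec_eq_iff forall_3 matrix_vector_mult_def sum_3 diag3_def vector_3 axis_def)
  ultimately have eq: "?e = - ?e" by simp
  have "(1::real) = - 1" using arg_cong[OF eq, of "\<lambda>x. x $ 3"] by (simp add: axis_def)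
  thus False by simp
qed


lemma hard:
  fixes H :: tensor4
  assumes HH: "H \<in> H4" and v: "v \<in> Cov1 H" "v \<noteq> 0"
    and comm: "\<And>A B. A \<in> Cov2 H \<Longrightarrow> B \<in> Cov2 H \<Longrightarrow> A ** B = B ** A"
  shows False
proof -
  define n where "n = (1 / norm v) *\<^sub>R v"
  have nV: "n \<in> Cov1 H" unfolding n_def by (rule V_scale[OF HH v(1)])
  have nn: "norm n = 1" unfolding n_def using v(2) by simp
  define S where "S = {x::real^3. norm x = 1 \<and> n \<bullet> x = 0}"
  have "S = {x. n \<bullet> x = 0} \<inter> sphere 0 1" unfolding S_def by auto
  hence cS: "compact S" using closed_Int_compact[OF closed_hyperplane compact_sphere] by simp
  obtain u0 where u0: "norm u0 = 1" "u0 \<bullet> n = 0" using orth_exists[OF nn] by blast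
  hence "u0 \<in> S" unfolding S_def by (simp add: inner_commute)
  hence neS: "S \<noteq> {}" by blast
  define \<psi> where "\<psi> = (\<lambda>x. F4 H x x x x + F4 H x x x n)"
  have "continuous_on S \<psi>" unfolding \<psi>_def F4_def by (intro continuous_intros)
  then obtain u where uS: "u \<in> S" and umax: "\<And>y. y \<in> S \<Longrightarrow> \<psi> y \<le> \<psi> u"
    using continuous_attains_sup[OF cS neS] by blast
  have un: "norm u = 1" "u \<bullet> n = 0" using uS unfolding S_def by (auto simp: inner_commute)
  define g where "g = frame u n"
  have gS: "g \<in> SO3" unfolding g_def by (rule frame_SO3[OF un(1) nn un(2)])
  define H' where "H' = act4 g H"
  have H'4: "H' \<in> H4" unfolding H'_def by (rule act4_H4[OF HH SO3_D(1)[OF gS]])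
  have e3: "axis 3 1 \<in> Cov1 H'"
  proof -
    have "g *v n \<in> (\<lambda>v. g *v v) ` Cov1 H" using nV by blast
    moreover have "g *v n = axis 3 1" unfolding g_def by (rule frame_mv(1)[OF un(1) nn un(2)])
    ultimately show ?thesis unfolding H'_def Cov1_act[OF gS HH] by simp
  qed
  have comm': "A' ** B' = B' ** A'" if A': "A' \<in> Cov2 H'" and B': "B' \<in> Cov2 H'" for A' B'
  proof -
    obtain A where A: "A \<in> Cov2 H" "A' = g ** A ** transpose g" using A' unfolding H'_def Cov2_act[OF gS HH] by blast
    obtain B where B: "B \<in> Cov2 H" "B' = g ** B ** transpose g" using B' unfolding H'_def Cov2_act[OF gS HH] by blast
    show ?thesis unfolding A(2) B(2) conj_mult[OF gS] comm[OF A(1) B(1)] ..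
  qed
  define b where "b = cross3 n u"
  have bn: "norm b = 1" unfolding b_def by (rule norm_cross_unit[OF nn un(1)]) (use un(2) in \<open>simp add: inner_commute\<close>)
  have Pf_eq: "Pf H' t = \<psi> (cos t *\<^sub>R u + sin t *\<^sub>R b)" for t
  proof -
    have "Pf H' t = F4 H' (vector [cos t, sin t, 0]) (vector [cos t, sin t, 0]) (vector [cos t, sin t, 0]) (vector [cos t, sin t, 0])
       + F4 H' (vector [cos t, sin t, 0]) (vector [cos t, sin t, 0]) (vector [cos t, sin t, 0]) (axis 3 1)"
      by (rule F4_expand[OF H'4, symmetric])
    also have "\<dots> = \<psi> (cos t *\<^sub>R u + sin t *\<^sub>R b)"
      unfolding H'_def F4_act \<psi>_def g_def frame_tmv b_def ..
    finally show ?thesis .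
  qed
  have inS: "cos t *\<^sub>R u + sin t *\<^sub>R b \<in> S" for t
  proof -
    have ub: "u \<bullet> b = 0" unfolding b_def by (simp add: dot_cross_self)
    have uu: "u \<bullet> u = 1" "b \<bullet> b = 1" using un(1) bn by (simp_all add: norm_eq_1)
    have "(cos t *\<^sub>R u + sin t *\<^sub>R b) \<bullet> (cos t *\<^sub>R u + sin t *\<^sub>R b) = (cos t)^2 + (sin t)^2"
      using ub uu by (simp add: inner_add_left inner_add_right inner_commute power2_eq_square)
    hence "norm (cos t *\<^sub>R u + sin t *\<^sub>R b) = 1" by (simp add: norm_eq_1)
    moreover have "n \<bullet> (cos t *\<^sub>R u + sin t *\<^sub>R b) = 0"
      using un(2) unfolding b_def by (simp add: inner_add_right inner_commute dot_cross_self)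
    ultimately show ?thesis unfolding S_def by simp
  qed
  have le: "\<forall>y. \<bar>0 - y\<bar> < 1 \<longrightarrow> Pf H' y \<le> Pf H' 0"
  proof (intro allI impI)
    fix y :: real
    have "Pf H' 0 = \<psi> u" using Pf_eq[of 0] by simp
    thus "Pf H' y \<le> Pf H' 0" using Pf_eq[of y] umax[OF inS[of y]] by simp
  qed
  have dv: "4 * H' 1 1 1 2 + 3 * H' 1 1 2 3 = 0"
    by (rule DERIV_local_max[OF Pf_deriv _ le]) simp
  show False by (rule hard_frame[OF H'4 e3 comm' dv])
qed

lemma V0_comm: assumes HH: "H \<in> H4" and V0: "Cov1 H = {0}" and A: "A \<in> Cov2 H" and B: "B \<in> Cov2 H"
  shows "A ** B = B ** A"
proof -
  define M where "M = A ** B - B ** A"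
  have "axial M \<in> Cov1 H" unfolding M_def by (rule V_axial[OF HH A B])
  hence ax: "axial M = 0" using V0 by simp
  have as: "transpose M = - M" unfolding M_def
    using W_sym[OF HH A] W_sym[OF HH B] by (simp add: transpose_diff matrix_transpose_mul)
  have "M = crossmat (axial M)" using crossmat_axial[OF as] by simp
  also have "\<dots> = 0" unfolding ax by (simp add: crossmat_def vec_eq_iff forall_3 vector_3)
  finally show ?thesis unfolding M_def by simp
qed

lemma comm_V0: assumes HH: "H \<in> H4" and comm: "\<And>A B. A \<in> Cov2 H \<Longrightarrow> B \<in> Cov2 H \<Longrightarrow> A ** B = B ** A"
  shows "Cov1 H = {0}"
  using hard[OF HH _ _ comm] V_zero[OF HH] by blast

lemma part1: assumes HH: "H \<in> H4"
  shows "Cov1 H = {0} \<longleftrightarrow> (\<exists>g\<in>SO3. conjg g D2 \<subseteq> symgroup (Cov2 H))"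
proof
  assume "Cov1 H = {0}"
  hence c: "\<And>A B. A \<in> Cov2 H \<Longrightarrow> B \<in> Cov2 H \<Longrightarrow> A ** B = B ** A" using V0_comm[OF HH] by blast
  show "\<exists>g\<in>SO3. conjg g D2 \<subseteq> symgroup (Cov2 H)" by (rule comm_D2) (simp_all add: W_sym[OF HH] c)
next
  assume "\<exists>g\<in>SO3. conjg g D2 \<subseteq> symgroup (Cov2 H)"
  then obtain g where "g \<in> SO3" "conjg g D2 \<subseteq> symgroup (Cov2 H)" by blast
  hence "\<And>A B. A \<in> Cov2 H \<Longrightarrow> B \<in> Cov2 H \<Longrightarrow> A ** B = B ** A" using D2_comm by blast
  thus "Cov1 H = {0}" by (rule comm_V0[OF HH])
qed

lemma V_univ: assumes HH: "H \<in> H4" and v: "v \<in> Cov1 H" and w: "w \<in> Cov1 H" and vw: "cross3 v w \<noteq> 0"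
  shows "Cov1 H = UNIV"
proof -
  define u where "u = cross3 v w"
  have uV: "u \<in> Cov1 H" unfolding u_def by (rule V_cross[OF HH v w])
  have uu: "u \<bullet> u \<noteq> 0" using vw unfolding u_def by simp
  have "z \<in> Cov1 H" for z
  proof -
    have zu: "cross3 z u = (z \<bullet> w) *\<^sub>R v + (- (z \<bullet> v)) *\<^sub>R w" unfolding u_def by (simp add: cross_cross_right)
    have zuV: "cross3 z u \<in> Cov1 H" unfolding zu by (intro V_add[OF HH] V_scale[OF HH] v w)
    have "cross3 u (cross3 z u) = (u \<bullet> u) *\<^sub>R z - (u \<bullet> z) *\<^sub>R u" by (simp add: cross_cross_right)
    hence "z = (1 / (u \<bullet> u)) *\<^sub>R (cross3 u (cross3 z u) + (u \<bullet> z) *\<^sub>R u)" using uu by simp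
    moreover have "(1 / (u \<bullet> u)) *\<^sub>R (cross3 u (cross3 z u) + (u \<bullet> z) *\<^sub>R u) \<in> Cov1 H"
      by (intro V_add[OF HH] V_scale[OF HH] V_cross[OF HH] uV zuV)
    ultimately show ?thesis by simp
  qed
  thus ?thesis by blast
qed

lemma V_line: assumes HH: "H \<in> H4" and v: "v \<in> Cov1 H" "v \<noteq> 0" and w: "w \<in> Cov1 H" and vw: "cross3 v w = 0"
  shows "w = ((v \<bullet> w) / (v \<bullet> v)) *\<^sub>R v"
proof -
  have "cross3 v (cross3 v w) = 0" using vw by simp
  hence "(v \<bullet> w) *\<^sub>R v - (v \<bullet> v) *\<^sub>R w = 0" by (simp add: cross_cross_right)
  hence "(v \<bullet> v) *\<^sub>R w = (v \<bullet> w) *\<^sub>R v" by simp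
  hence "(1 / (v \<bullet> v)) *\<^sub>R ((v \<bullet> v) *\<^sub>R w) = (1 / (v \<bullet> v)) *\<^sub>R ((v \<bullet> w) *\<^sub>R v)" by simp
  thus ?thesis using v(2) by simp
qed

lemma dim_cases: assumes HH: "H \<in> H4"
  shows "(Cov1 H = {0} \<and> dim (Cov1 H) = 0)
    \<or> (\<exists>v. v \<noteq> 0 \<and> v \<in> Cov1 H \<and> (\<forall>w\<in>Cov1 H. \<exists>c. w = c *\<^sub>R v) \<and> dim (Cov1 H) = 1)
    \<or> (Cov1 H = UNIV \<and> dim (Cov1 H) = 3)"
proof (cases "\<exists>v\<in>Cov1 H. \<exists>w\<in>Cov1 H. cross3 v w \<noteq> 0")
  case True
  then obtain v w where "v \<in> Cov1 H" "w \<in> Cov1 H" "cross3 v w \<noteq> 0" by blast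
  hence "Cov1 H = UNIV" by (rule V_univ[OF HH])
  thus ?thesis by simp
next
  case False
  show ?thesis
  proof (cases "Cov1 H = {0}")
    case True thus ?thesis by simp
  next
    case nz: False
    then obtain v where v: "v \<in> Cov1 H" "v \<noteq> 0" using V_zero[OF HH] by blast
    have line: "\<forall>w\<in>Cov1 H. \<exists>c. w = c *\<^sub>R v"
      using V_line[OF HH v] False v(1) by blast
    have "Cov1 H = span {v}"
    proof
      show "Cov1 H \<subseteq> span {v}" using line by (auto simp: span_singleton)
      show "span {v} \<subseteq> Cov1 H" using V_scale[OF HH v(1)] by (auto simp: span_singleton)
    qed
    hence "dim (Cov1 H) = 1" using v(2) by simp
    thus ?thesis using v line by blast
  qed
qed

lemma alg_k:
  fixes a b c d p1 q1 r1 p2 q2 r2 :: real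
  assumes e11: "b*q1 = q1*c" and e12: "a*q1 + b*r1 = p1*b + q1*d" and e13: "c*p1 + d*q1 = q1*a + r1*c"
    and e21: "b*q2 = q2*c" and e22: "a*q2 + b*r2 = p2*b + q2*d" and e23: "c*p2 + d*q2 = q2*a + r2*c"
    and x: "q2*(p1 - r1) - q1*(p2 - r2) \<noteq> 0"
  shows "b = 0 \<and> c = 0 \<and> a = d"
proof -
  define x where "x = q2*(p1 - r1) - q1*(p2 - r2)"
  have x0: "x \<noteq> 0" using x x_def by simp
  have f1: "(b - c) * (p1 - r1) = 0" using e12 e13 e11 by (simp add: algebra_simps)
  have f2: "(b - c) * (p2 - r2) = 0" using e22 e23 e21 by (simp add: algebra_simps)
  have g1: "(b - c) * q1 = 0" using e11 by (simp add: algebra_simps)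
  have g2: "(b - c) * q2 = 0" using e21 by (simp add: algebra_simps)
  have "(b - c) * x = q2 * ((b - c) * (p1 - r1)) - q1 * ((b - c) * (p2 - r2))" by (simp add: x_def algebra_simps)
  hence "(b - c) * x = 0" using f1 f2 by simp
  hence bc: "b = c" using x0 by simp
  have h1: "(a - d) * q1 = b * (p1 - r1)" using e12 by (simp add: algebra_simps)
  have h2: "(a - d) * q2 = b * (p2 - r2)" using e22 by (simp add: algebra_simps)
  have "(a - d) * x = q2 * ((a - d) * q1) * 0 + (p1 - r1) * ((a - d) * q2) - (p2 - r2) * ((a - d) * q1)"
    by (simp add: x_def algebra_simps)
  also have "\<dots> = 0" unfolding h1 h2 by (simp add: algebra_simps)
  finally have ad: "a = d" using x0 by simp
  have k1: "b * (p1 - r1) = 0" using h1 ad by simp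
  have k2: "b * (p2 - r2) = 0" using h2 ad by simp
  have "b * x = q2 * (b * (p1 - r1)) - q1 * (b * (p2 - r2))" by (simp add: x_def algebra_simps)
  hence "b * x = 0" using k1 k2 by simp
  hence "b = 0" using x0 by simp
  thus ?thesis using bc ad by simp
qed

lemma conj_cancel: assumes "g \<in> SO3" shows "transpose g ** (g ** X ** transpose g) ** g = X"
proof -
  have "transpose g ** (g ** X ** transpose g) ** g = (transpose g ** g) ** X ** (transpose g ** g)"
    by (simp only: matrix_mul_assoc)
  thus ?thesis by (simp add: SO3_D[OF assms])
qed

lemma conj_cancel': assumes "g \<in> SO3" shows "g ** (transpose g ** X ** g) ** transpose g = X"
proof -
  have "g ** (transpose g ** X ** g) ** transpose g = (g ** transpose g) ** X ** (g ** transpose g)"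
    by (simp only: matrix_mul_assoc)
  thus ?thesis by (simp add: SO3_D[OF assms])
qed

lemma conj_conj: "(g ** m ** transpose g) ** (g ** A ** transpose g) ** transpose (g ** m ** transpose g)
   = g ** (m ** ((transpose g ** g) ** A ** (transpose g ** g)) ** transpose m) ** transpose g"
  for g m A :: "real^3^3"
proof -
  have t: "transpose (g ** m ** transpose g) = g ** transpose m ** transpose g"
    by (simp add: matrix_transpose_mul matrix_mul_assoc)
  show ?thesis by (simp only: t matrix_mul_assoc)
qed

lemma symgroup_conj: assumes g: "g \<in> SO3"
  shows "symgroup ((\<lambda>A. g ** A ** transpose g) ` W) = conjg g (symgroup W)"
proof (intro set_eqI iffI)
  fix k assume k: "k \<in> symgroup ((\<lambda>A. g ** A ** transpose g) ` W)"
  define m where "m = transpose g ** k ** g"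
  have kS: "k \<in> SO3" using k unfolding symgroup_def by auto
  have km: "k = g ** m ** transpose g" unfolding m_def by (simp add: conj_cancel'[OF g])
  have mS: "m \<in> SO3" unfolding m_def by (intro SO3_mult SO3_transpose g kS)
  have "m ** A ** transpose m = A" if A: "A \<in> W" for A
  proof -
    have "k ** (g ** A ** transpose g) ** transpose k = g ** A ** transpose g" using k A unfolding symgroup_def by auto
    hence "g ** (m ** A ** transpose m) ** transpose g = g ** A ** transpose g"
      unfolding km conj_conj by (simp add: SO3_D[OF g])
    hence "transpose g ** (g ** (m ** A ** transpose m) ** transpose g) ** g = transpose g ** (g ** A ** transpose g) ** g" by simp
    thus ?thesis by (simp add: conj_cancel[OF g])
  qed
  hence "m \<in> symgroup W" unfolding symgroup_def using mS by blast
  thus "k \<in> conjg g (symgroup W)" unfolding conjg_def km by blast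
next
  fix k assume "k \<in> conjg g (symgroup W)"
  then obtain m where m: "m \<in> symgroup W" and km: "k = g ** m ** transpose g" unfolding conjg_def by blast
  have mS: "m \<in> SO3" using m unfolding symgroup_def by auto
  have kS: "k \<in> SO3" unfolding km by (intro SO3_mult SO3_transpose g mS)
  have "k ** A' ** transpose k = A'" if A'W: "A' \<in> (\<lambda>A. g ** A ** transpose g) ` W" for A'
  proof -
    obtain A where A: "A \<in> W" "A' = g ** A ** transpose g" using A'W by blast
    have "m ** A ** transpose m = A" using m A(1) unfolding symgroup_def by auto
    thus ?thesis unfolding km A(2) conj_conj by (simp add: SO3_D[OF g])
  qed
  thus "k \<in> symgroup ((\<lambda>A. g ** A ** transpose g) ` W)" unfolding symgroup_def using kS by blast
qed

lemma conjg_conjg: assumes g: "g \<in> SO3" shows "conjg (transpose g) (conjg g S) = S"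
  unfolding conjg_def image_image by (simp add: conj_cancel[OF g])

lemma symZ2:
  fixes X :: tensor4
  assumes X: "X \<in> H4" and e3: "axis 3 1 \<in> Cov1 X" and line: "\<And>w. w \<in> Cov1 X \<Longrightarrow> \<exists>c. w = c *\<^sub>R axis 3 1"
  shows "symgroup (Cov2 X) = Z2"
proof -
  let ?e = "axis 3 1 :: real^3"
  have blk: "A$1$3 = 0 \<and> A$2$3 = 0 \<and> A$3$1 = 0 \<and> A$3$2 = 0" if A: "A \<in> Cov2 X" for A
  proof -
    obtain c where c: "A *v ?e = c *\<^sub>R ?e" using line[OF V_mv[OF X A e3]] by blast
    have "(A *v ?e)$1 = (c *\<^sub>R ?e)$1" "(A *v ?e)$2 = (c *\<^sub>R ?e)$2" using c by simp_all
    hence "A$1$3 = 0" "A$2$3 = 0" by (simp_all add: matrix_vector_mult_def sum_3 axis_def)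
    moreover have "A$3$1 = A$1$3" "A$3$2 = A$2$3" using sym_entries[OF W_sym[OF X A]] by auto
    ultimately show ?thesis by simp
  qed
  have ncomm: "\<exists>A1\<in>Cov2 X. \<exists>A2\<in>Cov2 X. A1 ** A2 \<noteq> A2 ** A1"
  proof (rule ccontr)
    assume "\<not> ?thesis"
    hence "\<And>A B. A \<in> Cov2 X \<Longrightarrow> B \<in> Cov2 X \<Longrightarrow> A ** B = B ** A" by blast
    thus False using hard[OF X e3] by (simp add: axis_eq_0_iff)
  qed
  then obtain A1 A2 where A1: "A1 \<in> Cov2 X" and A2: "A2 \<in> Cov2 X" and nc: "A1 ** A2 \<noteq> A2 ** A1" by blast
  define R where "R = diag3 (-1) (-1) 1"
  have RS: "R \<in> SO3" unfolding R_def by (rule diag3_SO3) auto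
  show ?thesis
  proof (intro set_eqI iffI)
    fix k assume k: "k \<in> symgroup (Cov2 X)"
    have kS: "k \<in> SO3" using k unfolding symgroup_def by auto
    have kc: "k ** A = A ** k" if A: "A \<in> Cov2 X" for A
    proof -
      have "k ** A ** transpose k = A" using k A unfolding symgroup_def by auto
      hence "k ** A ** transpose k ** k = A ** k" by simp
      moreover have "k ** A ** transpose k ** k = k ** A ** (transpose k ** k)" by (simp add: matrix_mul_assoc)
      ultimately show ?thesis by (simp add: SO3_D[OF kS])
    qed
    have E: "outer ?e ?e \<in> Cov2 X" by (rule W_outer[OF X e3])
    have kE: "k ** outer ?e ?e = outer ?e ?e ** k" by (rule kc[OF E])
    have "(k ** outer ?e ?e)$1$3 = (outer ?e ?e ** k)$1$3" "(k ** outer ?e ?e)$2$3 = (outer ?e ?e ** k)$2$3"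
         "(k ** outer ?e ?e)$3$1 = (outer ?e ?e ** k)$3$1" "(k ** outer ?e ?e)$3$2 = (outer ?e ?e ** k)$3$2"
      using kE by simp_all
    hence kz: "k$1$3 = 0" "k$2$3 = 0" "k$3$1 = 0" "k$3$2 = 0"
      by (simp_all add: matrix_matrix_mult_def sum_3 outer_def axis_def)
    have eqs: "k$1$2 * A$1$2 = A$1$2 * k$2$1 \<and>
       k$1$1 * A$1$2 + k$1$2 * A$2$2 = A$1$1 * k$1$2 + A$1$2 * k$2$2 \<and>
       k$2$1 * A$1$1 + k$2$2 * A$1$2 = A$1$2 * k$1$1 + A$2$2 * k$2$1" if A: "A \<in> Cov2 X" for A
    proof -
      have b: "A$1$3 = 0" "A$2$3 = 0" "A$3$1 = 0" "A$3$2 = 0" using blk[OF A] by auto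
      have s: "A$2$1 = A$1$2" using sym_entries[OF W_sym[OF X A]] by auto
      have "(k ** A)$1$1 = (A ** k)$1$1" "(k ** A)$1$2 = (A ** k)$1$2" "(k ** A)$2$1 = (A ** k)$2$1"
        using kc[OF A] by simp_all
      thus ?thesis by (simp add: matrix_matrix_mult_def sum_3 kz b s algebra_simps)
    qed
    have x: "A2$1$2 * (A1$1$1 - A1$2$2) - A1$1$2 * (A2$1$1 - A2$2$2) \<noteq> 0"
    proof
      assume x0: "A2$1$2 * (A1$1$1 - A1$2$2) - A1$1$2 * (A2$1$1 - A2$2$2) = 0"
      have b1: "A1$1$3 = 0" "A1$2$3 = 0" "A1$3$1 = 0" "A1$3$2 = 0" using blk[OF A1] by auto
      have b2: "A2$1$3 = 0" "A2$2$3 = 0" "A2$3$1 = 0" "A2$3$2 = 0" using blk[OF A2] by auto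
      have s1: "A1$2$1 = A1$1$2" using sym_entries[OF W_sym[OF X A1]] by auto
      have s2: "A2$2$1 = A2$1$2" using sym_entries[OF W_sym[OF X A2]] by auto
      have "A1 ** A2 = A2 ** A1"
        using x0 by (simp add: vec_eq_iff forall_3 matrix_matrix_mult_def sum_3 b1 b2 s1 s2 algebra_simps)
      thus False using nc by simp
    qed
    have k12: "k$1$2 = 0 \<and> k$2$1 = 0 \<and> k$1$1 = k$2$2"
      using alg_k[of "k$1$2" "A1$1$2" "k$2$1" "k$1$1" "A1$2$2" "A1$1$1" "k$2$2" "A2$1$2" "A2$2$2" "A2$1$1"]
        eqs[OF A1] eqs[OF A2] x by (simp add: algebra_simps)
    have "(k ** transpose k)$1$1 = (mat 1 :: real^3^3) $ 1 $ 1" "(k ** transpose k)$3$3 = (mat 1 :: real^3^3) $ 3 $ 3"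
      using SO3_D(4)[OF kS] by simp_all
    hence sq: "k$1$1 * k$1$1 = 1" "k$3$3 * k$3$3 = 1"
      by (simp_all add: matrix_matrix_mult_def transpose_def sum_3 kz k12 mat_def)
    have "det k = k$1$1 * k$1$1 * k$3$3" using k12 kz by (simp add: det_3)
    hence k33: "k$3$3 = 1" using SO3_D(2)[OF kS] sq by simp
    have "k$1$1 = 1 \<or> k$1$1 = -1" using sq(1) by (metis mult_cancel_left2 mult_minus_left square_eq_1_iff)
    thus "k \<in> Z2"
    proof
      assume "k$1$1 = 1"
      hence "k = mat 1" using k12 kz k33 by (simp add: vec_eq_iff forall_3 mat_def)
      thus ?thesis unfolding Z2_def by simp
    next
      assume "k$1$1 = -1"
      hence "k = diag3 (-1) (-1) 1" using k12 kz k33 by (simp add: vec_eq_iff forall_3 diag3_def vector_3)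
      thus ?thesis unfolding Z2_def by simp
    qed
  next
    fix k assume "k \<in> Z2"
    hence "k = mat 1 \<or> k = R" unfolding Z2_def R_def by auto
    thus "k \<in> symgroup (Cov2 X)"
    proof
      assume "k = mat 1" thus ?thesis unfolding symgroup_def using mat1_SO3 by simp
    next
      assume kR: "k = R"
      have "R ** A ** transpose R = A" if A: "A \<in> Cov2 X" for A
      proof -
        have b: "A$1$3 = 0" "A$2$3 = 0" "A$3$1 = 0" "A$3$2 = 0" using blk[OF A] by auto
        show ?thesis unfolding R_def
          by (simp add: vec_eq_iff forall_3 matrix_matrix_mult_def transpose_def sum_3 diag3_def vector_3 b)
      qed
      thus ?thesis unfolding symgroup_def kR using RS by blast
    qed
  qed
qed

lemma part2_fwd:
  fixes H :: tensor4
  assumes HH: "H \<in> H4" and v: "v \<noteq> 0" "v \<in> Cov1 H" and line: "\<forall>w\<in>Cov1 H. \<exists>c. w = c *\<^sub>R v"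
  shows "\<exists>g\<in>SO3. symgroup (Cov2 H) = conjg g Z2"
proof -
  define n where "n = (1 / norm v) *\<^sub>R v"
  have nV: "n \<in> Cov1 H" unfolding n_def by (rule V_scale[OF HH v(2)])
  have nn: "norm n = 1" unfolding n_def using v(1) by simp
  have vn: "v = norm v *\<^sub>R n" unfolding n_def using v(1) by simp
  obtain u where un: "norm u = 1" "u \<bullet> n = 0" using orth_exists[OF nn] by blast
  define g where "g = frame u n"
  have gS: "g \<in> SO3" unfolding g_def by (rule frame_SO3[OF un(1) nn un(2)])
  have gn: "g *v n = axis 3 1" unfolding g_def by (rule frame_mv(1)[OF un(1) nn un(2)])
  define H' where "H' = act4 g H"
  have H'4: "H' \<in> H4" unfolding H'_def by (rule act4_H4[OF HH SO3_D(1)[OF gS]])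
  have e3: "axis 3 1 \<in> Cov1 H'"
  proof -
    have "g *v n \<in> (\<lambda>v. g *v v) ` Cov1 H" using nV by blast
    thus ?thesis unfolding H'_def Cov1_act[OF gS HH] gn by simp
  qed
  have line': "\<exists>c. w' = c *\<^sub>R axis 3 1" if w': "w' \<in> Cov1 H'" for w'
  proof -
    obtain w where w: "w \<in> Cov1 H" "w' = g *v w" using w' unfolding H'_def Cov1_act[OF gS HH] by blast
    obtain c where c: "w = c *\<^sub>R v" using line w(1) by blast
    have "w' = (c * norm v) *\<^sub>R axis 3 1"
      unfolding w(2) c by (subst vn) (simp add: matrix_vector_mult_scaleR gn)
    thus ?thesis by blast
  qed
  have "symgroup (Cov2 H') = Z2" by (rule symZ2[OF H'4 e3 line'])
  hence "conjg g (symgroup (Cov2 H)) = Z2" unfolding H'_def Cov2_act[OF gS HH] symgroup_conj[OF gS] .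
  hence "symgroup (Cov2 H) = conjg (transpose g) Z2" using conjg_conjg[OF gS] by metis
  thus ?thesis using SO3_transpose[OF gS] by blast
qed

lemma part3_fwd:
  fixes H :: tensor4
  assumes HH: "H \<in> H4" and V: "Cov1 H = UNIV"
  shows "symgroup (Cov2 H) = {mat 1}"
proof (intro set_eqI iffI)
  fix k assume k: "k \<in> symgroup (Cov2 H)"
  have kS: "k \<in> SO3" using k unfolding symgroup_def by auto
  have kc: "k ** A = A ** k" if A: "A \<in> Cov2 H" for A
  proof -
    have "k ** A ** transpose k = A" using k A unfolding symgroup_def by auto
    hence "k ** A ** transpose k ** k = A ** k" by simp
    moreover have "k ** A ** transpose k ** k = k ** A ** (transpose k ** k)" by (simp add: matrix_mul_assoc)
    ultimately show ?thesis by (simp add: SO3_D[OF kS])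
  qed
  have ko: "k ** outer w w = outer w w ** k" for w using kc[OF W_outer[OF HH]] V by simp
  have e1: "(k ** outer (axis 1 1) (axis 1 1))$i$j = (outer (axis 1 1) (axis 1 1) ** k)$i$j" for i j using ko by simp
  have e2: "(k ** outer (axis 2 1) (axis 2 1))$i$j = (outer (axis 2 1) (axis 2 1) ** k)$i$j" for i j using ko by simp
  have e12: "(k ** outer (axis 1 1 + axis 2 1) (axis 1 1 + axis 2 1))$1$2 = (outer (axis 1 1 + axis 2 1) (axis 1 1 + axis 2 1) ** k)$1$2" using ko by simp
  have e13: "(k ** outer (axis 1 1 + axis 3 1) (axis 1 1 + axis 3 1))$1$3 = (outer (axis 1 1 + axis 3 1) (axis 1 1 + axis 3 1) ** k)$1$3" using ko by simp
  have z: "k$2$1 = 0" "k$3$1 = 0" "k$1$2 = 0" "k$1$3 = 0" "k$3$2 = 0" "k$2$3 = 0"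
    using e1[of 2 1] e1[of 3 1] e1[of 1 2] e1[of 1 3] e2[of 3 2] e2[of 2 3]
    by (simp_all add: matrix_matrix_mult_def sum_3 outer_def axis_def)
  have d: "k$1$1 = k$2$2" "k$1$1 = k$3$3"
    using e12 e13 by (simp_all add: matrix_matrix_mult_def sum_3 outer_def axis_def z)
  have "(k ** transpose k)$1$1 = (mat 1 :: real^3^3) $ 1 $ 1" using SO3_D(4)[OF kS] by simp
  hence sq: "k$1$1 * k$1$1 = 1" by (simp add: matrix_matrix_mult_def transpose_def sum_3 z mat_def)
  have "det k = k$1$1 * k$1$1 * k$1$1" using z d by (simp add: det_3)
  hence "k$1$1 = 1" using SO3_D(2)[OF kS] sq by simp
  hence "k = mat 1" using z d by (simp add: vec_eq_iff forall_3 mat_def)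
  thus "k \<in> {mat 1}" by simp
next
  fix k assume "k \<in> {mat 1 :: real^3^3}"
  thus "k \<in> symgroup (Cov2 H)" unfolding symgroup_def using mat1_SO3 by simp
qed

lemma Rz_ne: assumes g: "g \<in> SO3" shows "g ** diag3 (-1) (-1) 1 ** transpose g \<noteq> mat 1"
proof
  assume "g ** diag3 (-1) (-1) 1 ** transpose g = mat 1"
  hence "transpose g ** (g ** diag3 (-1) (-1) 1 ** transpose g) ** g = transpose g ** mat 1 ** g" by simp
  hence "diag3 (-1) (-1) 1 = (mat 1 :: real^3^3)" by (simp add: conj_cancel[OF g] SO3_D[OF g])
  hence "(diag3 (-1) (-1) 1 :: real^3^3) $ 1 $ 1 = (mat 1 :: real^3^3) $ 1 $ 1" by simp
  thus False by (simp add: diag3_def vector_3 mat_def)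
qed

lemma conj_ne1: assumes g: "g \<in> SO3" and h: "h \<noteq> mat 1" shows "g ** h ** transpose g \<noteq> mat 1"
proof
  assume "g ** h ** transpose g = mat 1"
  hence "transpose g ** (g ** h ** transpose g) ** g = transpose g ** mat 1 ** g" by simp
  hence "h = mat 1" by (simp add: conj_cancel[OF g] SO3_D[OF g])
  thus False using h by simp
qed

lemma conjZ2: assumes g: "g \<in> SO3" shows "conjg g Z2 = {mat 1, g ** diag3 (-1) (-1) 1 ** transpose g}"
  unfolding conjg_def Z2_def using SO3_D[OF g] by auto

lemma Z2_ne1: assumes g: "g \<in> SO3" shows "conjg g Z2 \<noteq> {mat 1}"
  unfolding conjZ2[OF g] using Rz_ne[OF g] by auto

lemma h1_ne: "diag3 1 (-1) (-1) \<noteq> (mat 1 :: real^3^3)"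
proof
  assume "diag3 1 (-1) (-1) = (mat 1 :: real^3^3)"
  hence "(diag3 1 (-1) (-1) :: real^3^3) $ 2 $ 2 = (mat 1 :: real^3^3) $ 2 $ 2" by simp
  thus False by (simp add: diag3_def vector_3 mat_def)
qed

lemma h2_ne: "diag3 (-1) 1 (-1) \<noteq> (mat 1 :: real^3^3)"
proof
  assume "diag3 (-1) 1 (-1) = (mat 1 :: real^3^3)"
  hence "(diag3 (-1) 1 (-1) :: real^3^3) $ 1 $ 1 = (mat 1 :: real^3^3) $ 1 $ 1" by simp
  thus False by (simp add: diag3_def vector_3 mat_def)
qed

lemma h12_ne: "diag3 1 (-1) (-1) \<noteq> (diag3 (-1) 1 (-1) :: real^3^3)"
proof
  assume "diag3 1 (-1) (-1) = (diag3 (-1) 1 (-1) :: real^3^3)"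
  hence "(diag3 1 (-1) (-1) :: real^3^3) $ 1 $ 1 = (diag3 (-1) 1 (-1) :: real^3^3) $ 1 $ 1" by simp
  thus False by (simp add: diag3_def vector_3)
qed

lemma D2_not_1: assumes g: "g \<in> SO3" shows "\<not> conjg g D2 \<subseteq> {mat 1}"
proof
  assume "conjg g D2 \<subseteq> {mat 1}"
  moreover have "g ** diag3 1 (-1) (-1) ** transpose g \<in> conjg g D2" unfolding conjg_def D2_def by auto
  ultimately show False using conj_ne1[OF g h1_ne] by auto
qed

lemma D2_not_Z2: assumes g': "g' \<in> SO3" and g: "g \<in> SO3" shows "\<not> conjg g' D2 \<subseteq> conjg g Z2"
proof
  assume sub: "conjg g' D2 \<subseteq> conjg g Z2"
  have a: "g' ** diag3 1 (-1) (-1) ** transpose g' \<in> conjg g Z2" using sub unfolding conjg_def D2_def by auto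
  have b: "g' ** diag3 (-1) 1 (-1) ** transpose g' \<in> conjg g Z2" using sub unfolding conjg_def D2_def by auto
  have "g' ** diag3 1 (-1) (-1) ** transpose g' = g ** diag3 (-1) (-1) 1 ** transpose g"
    using a conj_ne1[OF g' h1_ne] unfolding conjZ2[OF g] by auto
  moreover have "g' ** diag3 (-1) 1 (-1) ** transpose g' = g ** diag3 (-1) (-1) 1 ** transpose g"
    using b conj_ne1[OF g' h2_ne] unfolding conjZ2[OF g] by auto
  ultimately have "g' ** diag3 1 (-1) (-1) ** transpose g' = g' ** diag3 (-1) 1 (-1) ** transpose g'" by simp
  hence "transpose g' ** (g' ** diag3 1 (-1) (-1) ** transpose g') ** g' = transpose g' ** (g' ** diag3 (-1) 1 (-1) ** transpose g') ** g'" by simp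
  hence "diag3 1 (-1) (-1) = (diag3 (-1) 1 (-1) :: real^3^3)" by (simp add: conj_cancel[OF g'])
  thus False using h12_ne by simp
qed

theorem lemma9p1:
  fixes H :: tensor4
  assumes "H \<in> H4"
  shows "(Cov1 H = {0} \<longleftrightarrow> (\<exists>g\<in>SO3. conjg g D2 \<subseteq> symgroup (Cov2 H)))
       \<and> (dim (Cov1 H) = 1 \<longleftrightarrow> (\<exists>g\<in>SO3. symgroup (Cov2 H) = conjg g Z2))
       \<and> (dim (Cov1 H) = 3 \<longleftrightarrow> symgroup (Cov2 H) = {mat 1})"
proof -
  note P1 = part1[OF assms]
  have notZ2_if_D2: "\<not> (\<exists>g\<in>SO3. symgroup (Cov2 H) = conjg g Z2)" if "Cov1 H = {0}"
    using P1 that D2_not_Z2 by metis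
  have not1_if_D2: "symgroup (Cov2 H) \<noteq> {mat 1}" if "Cov1 H = {0}"
    using P1 that D2_not_1 by metis
  show ?thesis
    using dim_cases[OF assms]
  proof (elim disjE conjE exE)
    assume V0: "Cov1 H = {0}" and d0: "dim (Cov1 H) = 0"
    show ?thesis using P1 V0 d0 notZ2_if_D2[OF V0] not1_if_D2[OF V0] by simp
  next
    fix v assume v: "v \<noteq> 0" "v \<in> Cov1 H" and line: "\<forall>w\<in>Cov1 H. \<exists>c. w = c *\<^sub>R v" and d1: "dim (Cov1 H) = 1"
    have "Cov1 H \<noteq> {0}" using v by auto
    moreover obtain g where g: "g \<in> SO3" "symgroup (Cov2 H) = conjg g Z2" using part2_fwd[OF assms v line] by blast
    ultimately show ?thesis using P1 d1 Z2_ne1[OF g(1)] by auto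
  next
    assume VU: "Cov1 H = UNIV" and d3: "dim (Cov1 H) = 3"
    have nz: "Cov1 H \<noteq> {0}"
    proof
      assume "Cov1 H = {0}"
      hence "axis 1 (1::real) = (0::real^3)" using VU by blast
      thus False by (simp add: axis_eq_0_iff)
    qed
    have s: "symgroup (Cov2 H) = {mat 1}" by (rule part3_fwd[OF assms VU])
    have r2: "\<not> (\<exists>g\<in>SO3. symgroup (Cov2 H) = conjg g Z2)" using s Z2_ne1 by auto
    show ?thesis using P1 d3 s r2 nz by simp
  qed
qed

end
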